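(* Let $L$ be a computable continuous language, $M$ an $L$-structure and $\mathbf d$ a Turing degree. Then $\operatorname{Th}(M)$ is $\mathbf d$-computable if and only if $\ulcorner \operatorname{Th}(M)\urcorner$ is a $\Pi^{\mathbf d}_1$ subset of $\mathbb N$.
   Context: Restricted $L$-formulae: the smallest set of $L$-formulae containing the atomic formulae and closed under the unary connectives $x\mapsto 0$, $x\mapsto 1$, $x\mapsto x/2$, the binary connective $x\mathbin{\dot-} y:=\max(x-y,0)$, and the quantifiers $\sup_x,\inf_x$. Since $L$ is computable, restricted formulae have Gödel numbers; $\ulcorner\varphi\urcorner$ is the Gödel number of $\varphi$, $\varphi_k$ is the formula with Gödel number $k$, and $\ulcorner\operatorname{Sent}_L\urcorner$ is the (computable) set of Gödel numbers of restricted $L$-sentences. $\ulcorner\operatorname{Th}(M)\urcorner:=\{k\in\ulcorner\operatorname{Sent}_L\urcorner : \varphi_k^M=0\}$. $\operatorname{Th}(M)$ is called $\mathbf d$-computable if there is a $\mathbf d$-algorithm (an algorithm with oracle for a function in $\mathbf d$) which, on input $k\in\ulcorner\operatorname{Sent}_L\urcorner$ and a rational $\epsilon>0$, returns an interval $I$ with rational endpoints such that $|I|<\epsilon$ and $\varphi_k^M\in I$. $\Pi^{\mathbf d}_1$ refers to the relativized arithmetical hierarchy. *)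

theory Defs
  imports Complex_Main "HOL-Library.Nat_Bijection"
begin

datatype prog =
    PZero
  | PSucc
  | PProj nat
  | POrac
  | PComp prog "prog list"
  | PPrim prog prog
  | PMin prog

inductive reval :: "(nat \<Rightarrow> nat) \<Rightarrow> prog \<Rightarrow> nat list \<Rightarrow> nat \<Rightarrow> bool" for f where
  rzero: "reval f PZero xs 0"
| rsucc: "reval f PSucc (x # xs) (Suc x)"
| rproj: "i < length xs \<Longrightarrow> reval f (PProj i) xs (xs ! i)"
| rorac: "reval f POrac (x # xs) (f x)"
| rcomp: "length gs = length ys \<Longrightarrow> (\<forall>i<length gs. reval f (gs ! i) xs (ys ! i))
          \<Longrightarrow> reval f h ys z \<Longrightarrow> reval f (PComp h gs) xs z"
| rprim0: "reval f g xs y \<Longrightarrow> reval f (PPrim g h) (0 # xs) y"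
| rprimS: "reval f (PPrim g h) (n # xs) y \<Longrightarrow> reval f h (n # y # xs) z
          \<Longrightarrow> reval f (PPrim g h) (Suc n # xs) z"
| rmin: "reval f g (n # xs) 0 \<Longrightarrow> (\<forall>m<n. \<exists>y. 0 < y \<and> reval f g (m # xs) y)
          \<Longrightarrow> reval f (PMin g) xs n"

definition comp_in :: "(nat \<Rightarrow> nat) \<Rightarrow> (nat \<Rightarrow> nat) \<Rightarrow> bool" where
  "comp_in f g \<longleftrightarrow> (\<exists>p. \<forall>x. reval f p [x] (g x))"

definition comp_in2 :: "(nat \<Rightarrow> nat) \<Rightarrow> (nat \<Rightarrow> nat \<Rightarrow> nat) \<Rightarrow> bool" where
  "comp_in2 f g \<longleftrightarrow> (\<exists>p. \<forall>x y. reval f p [x, y] (g x y))"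

definition computable :: "(nat \<Rightarrow> nat) \<Rightarrow> bool" where
  "computable g \<longleftrightarrow> comp_in (\<lambda>_. 0) g"

definition computable2 :: "(nat \<Rightarrow> nat \<Rightarrow> nat) \<Rightarrow> bool" where
  "computable2 g \<longleftrightarrow> comp_in2 (\<lambda>_. 0) g"

definition decidable_set :: "nat set \<Rightarrow> bool" where
  "decidable_set A \<longleftrightarrow> computable (\<lambda>x. if x \<in> A then 1 else 0)"

definition turing_reducible :: "(nat \<Rightarrow> nat) \<Rightarrow> (nat \<Rightarrow> nat) \<Rightarrow> bool" where
  "turing_reducible g f \<longleftrightarrow> comp_in f g"

definition turing_degree :: "(nat \<Rightarrow> nat) set \<Rightarrow> bool" where
  "turing_degree D \<longleftrightarrow> (\<exists>f. D = {g. turing_reducible g f \<and> turing_reducible f g})"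

definition Pi1_in :: "(nat \<Rightarrow> nat) set \<Rightarrow> nat set \<Rightarrow> bool" where
  "Pi1_in D A \<longleftrightarrow> (\<exists>f\<in>D. \<exists>R. comp_in2 f (\<lambda>k n. if R k n then 1 else 0)
                      \<and> A = {k. \<forall>n. R k n})"

text \<open>Moduli of uniform continuity are given dyadically:
  for a symbol s and n, if all arguments are within distance < 2^-(mod s n) then the
  values are within distance \<le> 2^-n.\<close>
record clang =
  fsyms :: "nat set"
  rsyms :: "nat set"
  farity :: "nat \<Rightarrow> nat"
  rarity :: "nat \<Rightarrow> nat"
  fmod :: "nat \<Rightarrow> nat \<Rightarrow> nat"
  rmod :: "nat \<Rightarrow> nat \<Rightarrow> nat"

definition computable_lang :: "clang \<Rightarrow> bool" where
  "computable_lang L \<longleftrightarrow> decidable_set (fsyms L) \<and> decidable_set (rsyms L)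
     \<and> computable (farity L) \<and> computable (rarity L)
     \<and> computable2 (fmod L) \<and> computable2 (rmod L)"

record 'a cstruct =
  univ :: "'a set"
  dst :: "'a \<Rightarrow> 'a \<Rightarrow> real"
  fint :: "nat \<Rightarrow> 'a list \<Rightarrow> 'a"
  rint :: "nat \<Rightarrow> 'a list \<Rightarrow> real"

definition is_structure :: "clang \<Rightarrow> 'a cstruct \<Rightarrow> bool" where
  "is_structure L M \<longleftrightarrow>
     univ M \<noteq> {}
   \<and> (\<forall>x\<in>univ M. \<forall>y\<in>univ M. 0 \<le> dst M x y \<and> dst M x y \<le> 1
        \<and> (dst M x y = 0 \<longleftrightarrow> x = y) \<and> dst M x y = dst M y x)
   \<and> (\<forall>x\<in>univ M. \<forall>y\<in>univ M. \<forall>z\<in>univ M. dst M x z \<le> dst M x y + dst M y z)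
   \<and> (\<forall>s::nat\<Rightarrow>'a. (\<forall>n. s n \<in> univ M)
        \<longrightarrow> (\<forall>e>0. \<exists>N. \<forall>m\<ge>N. \<forall>n\<ge>N. dst M (s m) (s n) < e)
        \<longrightarrow> (\<exists>x\<in>univ M. (\<lambda>n. dst M (s n) x) \<longlonglongrightarrow> 0))
   \<and> (\<forall>c\<in>fsyms L. \<forall>xs. set xs \<subseteq> univ M \<and> length xs = farity L c
        \<longrightarrow> fint M c xs \<in> univ M)
   \<and> (\<forall>c\<in>fsyms L. \<forall>n xs ys. set xs \<subseteq> univ M \<and> set ys \<subseteq> univ M
        \<and> length xs = farity L c \<and> length ys = farity L c
        \<and> (\<forall>i<farity L c. dst M (xs ! i) (ys ! i) < (1/2) ^ fmod L c n)
        \<longrightarrow> dst M (fint M c xs) (fint M c ys) \<le> (1/2) ^ n)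
   \<and> (\<forall>r\<in>rsyms L. \<forall>xs. set xs \<subseteq> univ M \<and> length xs = rarity L r
        \<longrightarrow> 0 \<le> rint M r xs \<and> rint M r xs \<le> 1)
   \<and> (\<forall>r\<in>rsyms L. \<forall>n xs ys. set xs \<subseteq> univ M \<and> set ys \<subseteq> univ M
        \<and> length xs = rarity L r \<and> length ys = rarity L r
        \<and> (\<forall>i<rarity L r. dst M (xs ! i) (ys ! i) < (1/2) ^ rmod L r n)
        \<longrightarrow> \<bar>rint M r xs - rint M r ys\<bar> \<le> (1/2) ^ n)"

datatype trm = Var nat | Fn nat "trm list"

datatype fm =
    Rel nat "trm list"
  | Dist trm trm
  | CZero fm
  | COne fm
  | Half fm
  | Monus fm fm
  | Sup nat fm
  | Inf nat fm

fun wf_trm :: "clang \<Rightarrow> trm \<Rightarrow> bool" where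
  "wf_trm L (Var x) = True"
| "wf_trm L (Fn c ts) = (c \<in> fsyms L \<and> length ts = farity L c \<and> (\<forall>t\<in>set ts. wf_trm L t))"

fun fv_trm :: "trm \<Rightarrow> nat set" where
  "fv_trm (Var x) = {x}"
| "fv_trm (Fn c ts) = (\<Union>t\<in>set ts. fv_trm t)"

fun wf_fm :: "clang \<Rightarrow> fm \<Rightarrow> bool" where
  "wf_fm L (Rel r ts) = (r \<in> rsyms L \<and> length ts = rarity L r \<and> (\<forall>t\<in>set ts. wf_trm L t))"
| "wf_fm L (Dist t u) = (wf_trm L t \<and> wf_trm L u)"
| "wf_fm L (CZero p) = wf_fm L p"
| "wf_fm L (COne p) = wf_fm L p"
| "wf_fm L (Half p) = wf_fm L p"
| "wf_fm L (Monus p q) = (wf_fm L p \<and> wf_fm L q)"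
| "wf_fm L (Sup x p) = wf_fm L p"
| "wf_fm L (Inf x p) = wf_fm L p"

fun fv_fm :: "fm \<Rightarrow> nat set" where
  "fv_fm (Rel r ts) = (\<Union>t\<in>set ts. fv_trm t)"
| "fv_fm (Dist t u) = fv_trm t \<union> fv_trm u"
| "fv_fm (CZero p) = fv_fm p"
| "fv_fm (COne p) = fv_fm p"
| "fv_fm (Half p) = fv_fm p"
| "fv_fm (Monus p q) = fv_fm p \<union> fv_fm q"
| "fv_fm (Sup x p) = fv_fm p - {x}"
| "fv_fm (Inf x p) = fv_fm p - {x}"

definition sentence :: "clang \<Rightarrow> fm \<Rightarrow> bool" where
  "sentence L p \<longleftrightarrow> wf_fm L p \<and> fv_fm p = {}"

fun tval :: "'a cstruct \<Rightarrow> (nat \<Rightarrow> 'a) \<Rightarrow> trm \<Rightarrow> 'a" where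
  "tval M s (Var x) = s x"
| "tval M s (Fn c ts) = fint M c (map (tval M s) ts)"

fun fval :: "'a cstruct \<Rightarrow> (nat \<Rightarrow> 'a) \<Rightarrow> fm \<Rightarrow> real" where
  "fval M s (Rel r ts) = rint M r (map (tval M s) ts)"
| "fval M s (Dist t u) = dst M (tval M s t) (tval M s u)"
| "fval M s (CZero p) = 0"
| "fval M s (COne p) = 1"
| "fval M s (Half p) = fval M s p / 2"
| "fval M s (Monus p q) = max (fval M s p - fval M s q) 0"
| "fval M s (Sup x p) = (SUP a\<in>univ M. fval M (s(x := a)) p)"
| "fval M s (Inf x p) = (INF a\<in>univ M. fval M (s(x := a)) p)"

text \<open>Value of a sentence in M (independent of the assignment into the universe).\<close>
definition sval :: "'a cstruct \<Rightarrow> fm \<Rightarrow> real" where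
  "sval M p = fval M (\<lambda>_. SOME a. a \<in> univ M) p"

fun code_trm :: "trm \<Rightarrow> nat" where
  "code_trm (Var x) = prod_encode (0, x)"
| "code_trm (Fn c ts) = prod_encode (1, prod_encode (c, list_encode (map code_trm ts)))"

fun code_fm :: "fm \<Rightarrow> nat" where
  "code_fm (Rel r ts) = prod_encode (0, prod_encode (r, list_encode (map code_trm ts)))"
| "code_fm (Dist t u) = prod_encode (1, prod_encode (code_trm t, code_trm u))"
| "code_fm (CZero p) = prod_encode (2, code_fm p)"
| "code_fm (COne p) = prod_encode (3, code_fm p)"
| "code_fm (Half p) = prod_encode (4, code_fm p)"
| "code_fm (Monus p q) = prod_encode (5, prod_encode (code_fm p, code_fm q))"
| "code_fm (Sup x p) = prod_encode (6, prod_encode (x, code_fm p))"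
| "code_fm (Inf x p) = prod_encode (7, prod_encode (x, code_fm p))"

definition fm_of_code :: "nat \<Rightarrow> fm" where
  "fm_of_code k = inv code_fm k"

definition sent_codes :: "clang \<Rightarrow> nat set" where
  "sent_codes L = code_fm ` {p. sentence L p}"

definition th_codes :: "clang \<Rightarrow> 'a cstruct \<Rightarrow> nat set" where
  "th_codes L M = {k \<in> sent_codes L. sval M (fm_of_code k) = 0}"

definition code_rat :: "rat \<Rightarrow> nat" where
  "code_rat q = (case quotient_of q of (a, b) \<Rightarrow> prod_encode (int_encode a, nat b))"

definition decode_rat :: "nat \<Rightarrow> rat" where
  "decode_rat n = (case prod_decode n of (a, b) \<Rightarrow> Fract (int_decode a) (int b))"

text \<open>Output m codes the closed interval [lo m, hi m].\<close>
definition lo :: "nat \<Rightarrow> real" where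
  "lo m = of_rat (decode_rat (fst (prod_decode m)))"
definition hi :: "nat \<Rightarrow> real" where
  "hi m = of_rat (decode_rat (snd (prod_decode m)))"

definition theory_computable_in :: "(nat \<Rightarrow> nat) set \<Rightarrow> clang \<Rightarrow> 'a cstruct \<Rightarrow> bool" where
  "theory_computable_in D L M \<longleftrightarrow>
     (\<exists>f\<in>D. \<exists>p. \<forall>k\<in>sent_codes L. \<forall>e::rat. 0 < e \<longrightarrow>
        (\<exists>m. reval f p [k, code_rat e] m
             \<and> hi m - lo m < of_rat e
             \<and> lo m \<le> sval M (fm_of_code k) \<and> sval M (fm_of_code k) \<le> hi m))"

end

theory Submission
  imports Defs
begin

definition rc :: "(nat \<Rightarrow> nat) \<Rightarrow> nat \<Rightarrow> (nat list \<Rightarrow> nat) \<Rightarrow> bool" where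
  "rc f n g \<longleftrightarrow> (\<exists>p. \<forall>xs. length xs = n \<longrightarrow> reval f p xs (g xs))"

named_theorems rc_intros

lemma rc_ext: "rc f n g \<Longrightarrow> (\<And>xs. length xs = n \<Longrightarrow> g xs = h xs) \<Longrightarrow> rc f n h"
  unfolding rc_def by metis

lemma rc_zero: "rc f n (\<lambda>xs. 0)"
  unfolding rc_def by (rule exI[of _ PZero]) (auto intro: rzero)

lemma rc_proj[rc_intros]: "i < n \<Longrightarrow> rc f n (\<lambda>xs. xs ! i)"
  unfolding rc_def by (rule exI[of _ "PProj i"]) (auto intro: rproj)

lemma rc_compL:
  assumes h: "rc f (length Gs) h" and G: "\<forall>G\<in>set Gs. rc f n G"
  shows "rc f n (\<lambda>xs. h (map (\<lambda>G. G xs) Gs))"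
proof -
  from h obtain ph where ph: "\<forall>xs. length xs = length Gs \<longrightarrow> reval f ph xs (h xs)"
    unfolding rc_def by blast
  define ps where "ps = map (\<lambda>G. SOME p. \<forall>xs. length xs = n \<longrightarrow> reval f p xs (G xs)) Gs"
  have ps: "\<forall>i<length Gs. \<forall>xs. length xs = n \<longrightarrow> reval f (ps ! i) xs ((Gs ! i) xs)"
  proof (intro allI impI)
    fix i :: nat and xs :: "nat list" assume i: "i < length Gs" and xs: "length xs = n"
    have "rc f n (Gs ! i)" using G i by auto
    then have "\<exists>p. \<forall>xs. length xs = n \<longrightarrow> reval f p xs ((Gs ! i) xs)" unfolding rc_def .
    then have "\<forall>xs. length xs = n \<longrightarrow> reval f (ps ! i) xs ((Gs ! i) xs)"
      unfolding ps_def using i by (simp only: nth_map) (rule someI_ex)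
    then show "reval f (ps ! i) xs ((Gs ! i) xs)" using xs by blast
  qed
  show ?thesis unfolding rc_def
  proof (intro exI allI impI)
    fix xs :: "nat list" assume xs: "length xs = n"
    show "reval f (PComp ph ps) xs (h (map (\<lambda>G. G xs) Gs))"
    proof (rule rcomp[where ys="map (\<lambda>G. G xs) Gs"])
      show "length ps = length (map (\<lambda>G. G xs) Gs)" unfolding ps_def by simp
      show "\<forall>i<length ps. reval f (ps ! i) xs (map (\<lambda>G. G xs) Gs ! i)"
        using ps xs unfolding ps_def by simp
      show "reval f ph (map (\<lambda>G. G xs) Gs) (h (map (\<lambda>G. G xs) Gs))" using ph by simp
    qed
  qed
qed

lemma rc_comp1: "rc f 1 (\<lambda>xs. h (xs!0)) \<Longrightarrow> rc f n a \<Longrightarrow> rc f n (\<lambda>xs. h (a xs))"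
  using rc_compL[of f "[a]" "\<lambda>xs. h (xs!0)" n] by simp

lemma rc_comp2: "rc f 2 (\<lambda>xs. h (xs!0) (xs!1)) \<Longrightarrow> rc f n a \<Longrightarrow> rc f n b
   \<Longrightarrow> rc f n (\<lambda>xs. h (a xs) (b xs))"
  using rc_compL[of f "[a,b]" "\<lambda>xs. h (xs!0) (xs!1)" n] by (simp add: numeral_2_eq_2)

lemma rc_comp3: "rc f 3 (\<lambda>xs. h (xs!0) (xs!1) (xs!2)) \<Longrightarrow> rc f n a \<Longrightarrow> rc f n b
   \<Longrightarrow> rc f n c \<Longrightarrow> rc f n (\<lambda>xs. h (a xs) (b xs) (c xs))"
  using rc_compL[of f "[a,b,c]" "\<lambda>xs. h (xs!0) (xs!1) (xs!2)" n] by (simp add: numeral_3_eq_3)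

lemma rc_Suc1: "rc f 1 (\<lambda>xs. Suc (xs!0))"
  unfolding rc_def
proof (intro exI[of _ PSucc] allI impI)
  fix xs :: "nat list" assume "length xs = 1"
  then obtain x where "xs = [x]" by (cases xs) auto
  then show "reval f PSucc xs (Suc (xs!0))" by (auto intro: rsucc)
qed

lemma rc_orac1: "rc f 1 (\<lambda>xs. f (xs!0))"
  unfolding rc_def
proof (intro exI[of _ POrac] allI impI)
  fix xs :: "nat list" assume "length xs = 1"
  then obtain x where "xs = [x]" by (cases xs) auto
  then show "reval f POrac xs (f (xs!0))" by (auto intro: rorac)
qed

lemma rc_Suc[rc_intros]: "rc f n a \<Longrightarrow> rc f n (\<lambda>xs. Suc (a xs))"
  by (rule rc_comp1[OF rc_Suc1])

lemma rc_orac: "rc f n a \<Longrightarrow> rc f n (\<lambda>xs. f (a xs))"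
  by (rule rc_comp1[OF rc_orac1])

lemma rc_const[rc_intros]: "rc f n (\<lambda>xs. c)"
  by (induction c) (auto intro: rc_zero rc_Suc)

fun prec :: "(nat list \<Rightarrow> nat) \<Rightarrow> (nat \<Rightarrow> nat \<Rightarrow> nat list \<Rightarrow> nat) \<Rightarrow> nat \<Rightarrow> nat list \<Rightarrow> nat" where
  "prec g h 0 ys = g ys"
| "prec g h (Suc k) ys = h k (prec g h k ys) ys"

lemma rc_prec:
  assumes "rc f n g" "rc f (Suc (Suc n)) (\<lambda>xs. h (xs!0) (xs!1) (drop 2 xs))"
  shows "rc f (Suc n) (\<lambda>xs. prec g h (hd xs) (tl xs))"
proof -
  obtain pg where pg: "\<forall>xs. length xs = n \<longrightarrow> reval f pg xs (g xs)" using assms(1) unfolding rc_def by blast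
  obtain ph where ph: "\<forall>xs. length xs = Suc (Suc n) \<longrightarrow> reval f ph xs (h (xs!0) (xs!1) (drop 2 xs))"
    using assms(2) unfolding rc_def by blast
  have *: "length ys = n \<Longrightarrow> reval f (PPrim pg ph) (k # ys) (prec g h k ys)" for k ys
  proof (induction k)
    case 0 then show ?case using pg by (auto intro: reval.intros)
  next
    case (Suc k)
    have "reval f ph (k # prec g h k ys # ys) (h k (prec g h k ys) ys)"
      using ph[rule_format, of "k # prec g h k ys # ys"] Suc.prems by simp
    then show ?case using Suc by (auto intro: reval.intros)
  qed
  show ?thesis unfolding rc_def
  proof (intro exI allI impI)
    fix xs :: "nat list" assume "length xs = Suc n"
    then obtain k ys where "xs = k # ys" "length ys = n" by (cases xs) auto
    then show "reval f (PPrim pg ph) xs (prec g h (hd xs) (tl xs))" using * by simp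
  qed
qed

lemma rc_min:
  assumes "rc f (Suc n) g" "\<And>xs. length xs = n \<Longrightarrow> \<exists>m. g (m # xs) = 0"
  shows "rc f n (\<lambda>xs. LEAST m. g (m # xs) = 0)"
proof -
  obtain pg where pg: "\<forall>xs. length xs = Suc n \<longrightarrow> reval f pg xs (g xs)" using assms(1) unfolding rc_def by blast
  show ?thesis unfolding rc_def
  proof (intro exI allI impI)
    fix xs :: "nat list" assume xs: "length xs = n"
    let ?m = "LEAST m. g (m # xs) = 0"
    have z: "g (?m # xs) = 0" using assms(2)[OF xs] by (rule LeastI_ex)
    have nz: "\<forall>m<?m. 0 < g (m # xs)" by (auto dest: not_less_Least)
    have e: "\<And>m. reval f pg (m # xs) (g (m # xs))" using pg xs by simp
    show "reval f (PMin pg) xs ?m"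
    proof (rule rmin)
      show "reval f pg (?m # xs) 0" using e[of ?m] z by simp
      show "\<forall>m<?m. \<exists>y>0. reval f pg (m # xs) y" using e nz by blast
    qed
  qed
qed

lemma rc_black2:
  assumes "rc f n a" "rc f n b" "\<And>xs. length xs = n \<Longrightarrow> reval f p [a xs, b xs] (F xs)"
  shows "rc f n F"
proof -
  obtain pa where pa: "\<forall>xs. length xs = n \<longrightarrow> reval f pa xs (a xs)" using assms(1) unfolding rc_def by blast
  obtain pb where pb: "\<forall>xs. length xs = n \<longrightarrow> reval f pb xs (b xs)" using assms(2) unfolding rc_def by blast
  show ?thesis unfolding rc_def
  proof (intro exI allI impI)
    fix xs :: "nat list" assume xs: "length xs = n"
    show "reval f (PComp p [pa, pb]) xs (F xs)"
    proof (rule rcomp[where ys="[a xs, b xs]"])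
      have "\<forall>i<2. reval f ([pa, pb] ! i) xs ([a xs, b xs] ! i)"
        using pa pb xs by (auto simp: less_2_cases_iff)
      then show "\<forall>i<length [pa, pb]. reval f ([pa, pb] ! i) xs ([a xs, b xs] ! i)" by simp
    qed (use assms(3)[OF xs] in auto)
  qed
qed

lemma rc_rec1:
  assumes "F 0 = c" "\<And>k. F (Suc k) = H k (F k)" "rc f 2 (\<lambda>xs. H (xs!0) (xs!1))"
  shows "rc f 1 (\<lambda>xs. F (xs!0))"
proof -
  have "rc f (Suc 0) (\<lambda>xs. prec (\<lambda>_. c) (\<lambda>k r ys. H k r) (hd xs) (tl xs))"
    by (rule rc_prec) (use assms(3) in \<open>auto simp: numeral_2_eq_2 intro: rc_const\<close>)
  moreover have "prec (\<lambda>_. c) (\<lambda>k r ys. H k r) k ys = F k" for k ys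
    by (induction k) (auto simp: assms)
  ultimately show ?thesis
    apply (rule_tac rc_ext, simp)
    subgoal for xs by (cases xs) auto
    done
qed

lemma rc_rec2:
  assumes "\<And>y. F 0 y = G y" "\<And>k y. F (Suc k) y = H k (F k y) y"
    "rc f 1 (\<lambda>xs. G (xs!0))" "rc f 3 (\<lambda>xs. H (xs!0) (xs!1) (xs!2))"
  shows "rc f 2 (\<lambda>xs. F (xs!0) (xs!1))"
proof -
  have e3: "Suc (Suc 1) = (3::nat)" by simp
  have h: "rc f (Suc (Suc 1)) (\<lambda>xs. (\<lambda>k r ys. H k r (ys!0)) (xs!0) (xs!1) (drop 2 xs))"
    unfolding e3
    by (rule rc_ext[OF assms(4)]) (simp add: nth_drop)
  have "rc f (Suc 1) (\<lambda>xs. prec (\<lambda>ys. G (ys!0)) (\<lambda>k r ys. H k r (ys!0)) (hd xs) (tl xs))"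
    by (rule rc_prec[OF assms(3) h])
  moreover have pr: "prec (\<lambda>ys. G (ys!0)) (\<lambda>k r ys. H k r (ys!0)) k ys = F k (ys!0)" for k ys
    by (induction k) (auto simp: assms)
  ultimately have "rc f 2 (\<lambda>xs. prec (\<lambda>ys. G (ys!0)) (\<lambda>k r ys. H k r (ys!0)) (hd xs) (tl xs))"
    by (simp add: numeral_2_eq_2)
  then show ?thesis
  proof (rule rc_ext)
    fix xs :: "nat list" assume "length xs = 2"
    then obtain a b where "xs = [a,b]" by (cases xs; cases "tl xs") (auto simp: numeral_2_eq_2)
    then show "prec (\<lambda>ys. G (ys!0)) (\<lambda>k r ys. H k r (ys!0)) (hd xs) (tl xs) = F (xs!0) (xs!1)"
      using pr by simp
  qed
qed

lemma rc_swap: "rc f 2 (\<lambda>xs. F (xs!0) (xs!1)) \<Longrightarrow> rc f 2 (\<lambda>xs. F (xs!1) (xs!0))"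
  by (rule rc_comp2) (auto intro: rc_proj)

lemma rc_add2: "rc f 2 (\<lambda>xs. xs!0 + xs!1)"
  by (rule rc_rec2[where G="\<lambda>y. y" and H="\<lambda>k r y. Suc r"]) (intro rc_intros | simp)+

lemma rc_add[rc_intros]: "rc f n a \<Longrightarrow> rc f n b \<Longrightarrow> rc f n (\<lambda>xs. a xs + b xs)"
  by (rule rc_comp2[OF rc_add2])

lemma rc_mult2: "rc f 2 (\<lambda>xs. xs!0 * xs!1)"
  by (rule rc_rec2[where G="\<lambda>y. 0" and H="\<lambda>k r y. r + y"]) (intro rc_intros | simp)+

lemma rc_mult[rc_intros]: "rc f n a \<Longrightarrow> rc f n b \<Longrightarrow> rc f n (\<lambda>xs. a xs * b xs)"
  by (rule rc_comp2[OF rc_mult2])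

lemma rc_pred1: "rc f 1 (\<lambda>xs. xs!0 - 1)"
  by (rule rc_rec1[where c=0 and H="\<lambda>k r. k"]) (intro rc_intros | simp)+

lemma rc_pred[rc_intros]: "rc f n a \<Longrightarrow> rc f n (\<lambda>xs. a xs - 1)"
  by (rule rc_comp1[OF rc_pred1])

lemma rc_minus2: "rc f 2 (\<lambda>xs. xs!0 - xs!1)"
proof -
  have "rc f 2 (\<lambda>xs. (\<lambda>y x. x - y) (xs!0) (xs!1))"
    by (rule rc_rec2[where G="\<lambda>y. y" and H="\<lambda>k r y. r - 1"]) (intro rc_intros | simp)+
  from rc_swap[OF this] show ?thesis by simp
qed

lemma rc_minus[rc_intros]: "rc f n a \<Longrightarrow> rc f n b \<Longrightarrow> rc f n (\<lambda>xs. a xs - b xs)"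
  by (rule rc_comp2[OF rc_minus2])

lemma rc_power2: "rc f 2 (\<lambda>xs. xs!0 ^ xs!1)"
proof -
  have "rc f 2 (\<lambda>xs. (\<lambda>y x. x ^ y) (xs!0) (xs!1))"
    by (rule rc_rec2[where G="\<lambda>y. 1" and H="\<lambda>k r y. r * y"]) (intro rc_intros | simp)+
  from rc_swap[OF this] show ?thesis by simp
qed

lemma rc_power[rc_intros]: "rc f n a \<Longrightarrow> rc f n b \<Longrightarrow> rc f n (\<lambda>xs. a xs ^ b xs)"
  by (rule rc_comp2[OF rc_power2])

definition ind :: "bool \<Rightarrow> nat" where "ind P = (if P then 1 else 0)"

lemma ind_simps[simp]: "ind True = 1" "ind False = 0" "ind P \<le> 1" "ind P = 0 \<longleftrightarrow> \<not> P" "ind P = 1 \<longleftrightarrow> P"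
  "0 < ind P \<longleftrightarrow> P"
  by (auto simp: ind_def)

lemma rc_ind_le[rc_intros]: "rc f n a \<Longrightarrow> rc f n b \<Longrightarrow> rc f n (\<lambda>xs. ind (a xs \<le> b xs))"
  by (rule rc_ext[where g="\<lambda>xs. 1 - (a xs - b xs)"]) ((intro rc_intros | simp)+, simp add: ind_def)

lemma rc_ind_less[rc_intros]: "rc f n a \<Longrightarrow> rc f n b \<Longrightarrow> rc f n (\<lambda>xs. ind (a xs < b xs))"
  by (rule rc_ext[where g="\<lambda>xs. ind (Suc (a xs) \<le> b xs)"]) ((intro rc_intros | simp)+, simp add: ind_def)

lemma rc_ind_conj[rc_intros]: "rc f n (\<lambda>xs. ind (P xs)) \<Longrightarrow> rc f n (\<lambda>xs. ind (Q xs)) \<Longrightarrow> rc f n (\<lambda>xs. ind (P xs \<and> Q xs))"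
  by (rule rc_ext[where g="\<lambda>xs. ind (P xs) * ind (Q xs)"]) ((intro rc_intros | simp)+, simp add: ind_def)

lemma rc_ind_not[rc_intros]: "rc f n (\<lambda>xs. ind (P xs)) \<Longrightarrow> rc f n (\<lambda>xs. ind (\<not> P xs))"
  by (rule rc_ext[where g="\<lambda>xs. 1 - ind (P xs)"]) ((intro rc_intros | simp)+, simp add: ind_def)

lemma rc_ind_disj[rc_intros]: "rc f n (\<lambda>xs. ind (P xs)) \<Longrightarrow> rc f n (\<lambda>xs. ind (Q xs)) \<Longrightarrow> rc f n (\<lambda>xs. ind (P xs \<or> Q xs))"
  by (rule rc_ext[where g="\<lambda>xs. ind (\<not> (\<not> P xs \<and> \<not> Q xs))"]) (intro rc_ind_not rc_ind_conj, simp_all)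

lemma rc_ind_eq[rc_intros]: "rc f n a \<Longrightarrow> rc f n b \<Longrightarrow> rc f n (\<lambda>xs. ind (a xs = b xs))"
  by (rule rc_ext[where g="\<lambda>xs. ind (a xs \<le> b xs \<and> b xs \<le> a xs)"]) ((intro rc_intros | simp)+, simp add: ind_def)

lemma rc_ind_even[rc_intros]: "rc f n a \<Longrightarrow> rc f n (\<lambda>xs. ind (even (a xs)))"
proof -
  have "rc f 1 (\<lambda>xs. ind (even (xs!0)))"
    by (rule rc_rec1[where c=1 and H="\<lambda>k r. 1 - r"], simp, simp add: ind_def)
       (intro rc_minus rc_const rc_proj, simp)
  then show "rc f n a \<Longrightarrow> rc f n (\<lambda>xs. ind (even (a xs)))" by (rule rc_comp1)
qed

lemma rc_if[rc_intros]: "rc f n (\<lambda>xs. ind (P xs)) \<Longrightarrow> rc f n b \<Longrightarrow> rc f n c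
   \<Longrightarrow> rc f n (\<lambda>xs. if P xs then b xs else c xs)"
  by (rule rc_ext[where g="\<lambda>xs. ind (P xs) * b xs + (1 - ind (P xs)) * c xs"]) (intro rc_intros | simp)+

lemma rc_minI:
  assumes "rc f (Suc n) (\<lambda>xs. ind (\<not> P (hd xs) (tl xs)))" "\<And>xs. length xs = n \<Longrightarrow> \<exists>m. P m xs"
  shows "rc f n (\<lambda>xs. LEAST m. P m xs)"
  using rc_min[OF assms(1)] assms(2) by simp

lemma div_least: "(x::nat) div y = (LEAST q. y = 0 \<or> x < Suc q * y)"
proof (cases "y = 0")
  case False
  show ?thesis
  proof (rule Least_equality[symmetric])
    show "y = 0 \<or> x < Suc (x div y) * y" using False
      by (metis add.commute div_mult_mod_eq mod_less_divisor mult_Suc nat_add_left_cancel_less neq0_conv)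
    fix q assume "y = 0 \<or> x < Suc q * y"
    then have "x < Suc q * y" using False by simp
    then show "x div y \<le> q"
      by (metis less_Suc_eq_le less_mult_imp_div_less)
  qed
qed simp

lemma rc_div2: "rc f 2 (\<lambda>xs. xs!0 div xs!1)"
proof -
  have "rc f 2 (\<lambda>xs. LEAST q. xs!1 = 0 \<or> xs!0 < Suc q * xs!1)"
  proof (rule rc_minI[where P="\<lambda>q xs. xs!1 = 0 \<or> xs!0 < Suc q * xs!1"])
    have "rc f 3 (\<lambda>xs. ind (\<not> (xs ! 2 = 0 \<or> xs ! 1 < Suc (xs!0) * xs ! 2)))"
      by (intro rc_intros; simp)
    then show "rc f (Suc 2) (\<lambda>xs. ind (\<not> (\<lambda>q xs. xs!1 = 0 \<or> xs!0 < Suc q * xs!1) (hd xs) (tl xs)))"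
      apply (rule_tac rc_ext, simp)
      subgoal for xs by (cases xs) auto
      done
    fix xs :: "nat list"
    show "\<exists>m. (\<lambda>q xs. xs!1 = 0 \<or> xs!0 < Suc q * xs!1) m xs"
      by (rule exI[of _ "xs!0"]) (cases "xs!1"; simp)
  qed
  then show ?thesis by (simp add: div_least)
qed

lemma rc_div[rc_intros]: "rc f n a \<Longrightarrow> rc f n b \<Longrightarrow> rc f n (\<lambda>xs. a xs div b xs)"
  by (rule rc_comp2[OF rc_div2])

lemma rc_mod[rc_intros]: "rc f n a \<Longrightarrow> rc f n b \<Longrightarrow> rc f n (\<lambda>xs. a xs mod b xs)"
  by (rule rc_ext[where g="\<lambda>xs. a xs - b xs * (a xs div b xs)"]) ((intro rc_intros | simp)+, simp add: minus_mult_div_eq_mod)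

fun zo :: "prog \<Rightarrow> prog" where
  "zo POrac = PZero"
| "zo (PComp h gs) = PComp (zo h) (map zo gs)"
| "zo (PPrim g h) = PPrim (zo g) (zo h)"
| "zo (PMin g) = PMin (zo g)"
| "zo p = p"

lemma reval_zo: "reval (\<lambda>_. 0) p xs y \<Longrightarrow> reval f (zo p) xs y"
proof (induction rule: reval.induct)
  case (rcomp gs ys xs h z)
  then show ?case by (auto intro!: reval.rcomp)
qed (auto intro: reval.intros)

lemma rc_from_comp_in: "comp_in (\<lambda>_. 0) g \<Longrightarrow> rc f 1 (\<lambda>xs. g (xs!0))"
  unfolding comp_in_def rc_def
proof (elim exE, intro exI allI impI)
  fix p and xs :: "nat list" assume p: "\<forall>x. reval (\<lambda>_. 0) p [x] (g x)" and "length xs = 1"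
  then obtain x where "xs = [x]" by (cases xs) auto
  then show "reval f (zo p) xs (g (xs!0))" using p reval_zo by auto
qed

lemma rc_from_comp_in2: "comp_in2 (\<lambda>_. 0) g \<Longrightarrow> rc f 2 (\<lambda>xs. g (xs!0) (xs!1))"
  unfolding comp_in2_def rc_def
proof (elim exE, intro exI allI impI)
  fix p and xs :: "nat list" assume p: "\<forall>x y. reval (\<lambda>_. 0) p [x, y] (g x y)" and "length xs = 2"
  then obtain x y where "xs = [x, y]" by (cases xs; cases "tl xs") (auto simp: numeral_2_eq_2)
  then show "reval f (zo p) xs (g (xs!0) (xs!1))" using p reval_zo by auto
qed

lemma rc_from_computable: "computable g \<Longrightarrow> rc f n a \<Longrightarrow> rc f n (\<lambda>xs. g (a xs))"
  unfolding computable_def by (rule rc_comp1[OF rc_from_comp_in])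

lemma rc_from_computable2: "computable2 g \<Longrightarrow> rc f n a \<Longrightarrow> rc f n b \<Longrightarrow> rc f n (\<lambda>xs. g (a xs) (b xs))"
  unfolding computable2_def by (rule rc_comp2[OF rc_from_comp_in2])

lemma rc_from_decidable: "decidable_set A \<Longrightarrow> rc f n a \<Longrightarrow> rc f n (\<lambda>xs. ind (a xs \<in> A))"
  unfolding decidable_set_def ind_def by (rule rc_from_computable)

lemma rc_minI1:
  assumes "rc f 2 (\<lambda>xs. ind (\<not> P (xs!0) (xs!1)))" "\<And>x. \<exists>m. P m x"
  shows "rc f 1 (\<lambda>xs. LEAST m. P m (xs!0))"
proof (rule rc_minI[where P="\<lambda>m xs. P m (xs!0)"])
  have e: "Suc 1 = (2::nat)" by simp
  show "rc f (Suc 1) (\<lambda>xs. ind (\<not> (\<lambda>m xs. P m (xs!0)) (hd xs) (tl xs)))"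
    unfolding e
  proof (rule rc_ext[OF assms(1)])
    fix xs :: "nat list" assume "length xs = 2"
    then obtain a b where "xs = [a,b]" by (cases xs; cases "tl xs") (auto simp: numeral_2_eq_2)
    then show "ind (\<not> P (xs!0) (xs!1)) = ind (\<not> (\<lambda>m xs. P m (xs!0)) (hd xs) (tl xs))" by simp
  qed
qed (use assms(2) in auto)

lemma rc_triangle[rc_intros]: "rc f n a \<Longrightarrow> rc f n (\<lambda>xs. triangle (a xs))"
proof -
  have "rc f 1 (\<lambda>xs. triangle (xs!0))"
    by (rule rc_rec1[where c=0 and H="\<lambda>k r. r + Suc k"]) (intro rc_intros | simp)+
  then show "rc f n a \<Longrightarrow> rc f n (\<lambda>xs. triangle (a xs))" by (rule rc_comp1)
qed

definition pe :: "nat \<Rightarrow> nat \<Rightarrow> nat" where "pe a b = prod_encode (a, b)"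
definition pd1 :: "nat \<Rightarrow> nat" where "pd1 z = fst (prod_decode z)"
definition pd2 :: "nat \<Rightarrow> nat" where "pd2 z = snd (prod_decode z)"

lemma pd_pe[simp]: "pd1 (pe a b) = a" "pd2 (pe a b) = b"
  by (auto simp: pe_def pd1_def pd2_def)

lemma pe_pd[simp]: "pe (pd1 z) (pd2 z) = z"
  by (simp add: pe_def pd1_def pd2_def)

lemma rc_pe[rc_intros]: "rc f n a \<Longrightarrow> rc f n b \<Longrightarrow> rc f n (\<lambda>xs. pe (a xs) (b xs))"
  by (rule rc_ext[where g="\<lambda>xs. triangle (a xs + b xs) + a xs"]) ((intro rc_intros | simp)+, simp add: pe_def prod_encode_def)

lemma triangle_mono: "a \<le> b \<Longrightarrow> triangle a \<le> triangle b"
  by (induction b) (auto simp: le_Suc_eq)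

definition pds :: "nat \<Rightarrow> nat" where "pds z = (LEAST s. z < triangle (Suc s))"

lemma pds_eq: "pds z = pd1 z + pd2 z"
proof -
  obtain m n where mn: "prod_decode z = (m, n)" by (cases "prod_decode z")
  then have z: "z = triangle (m + n) + m"
    using prod_decode_inverse[of z] by (simp add: prod_encode_def)
  have "pds z = m + n" unfolding pds_def
  proof (rule Least_equality)
    show "z < triangle (Suc (m + n))" using z by simp
    fix s assume "z < triangle (Suc s)"
    then show "m + n \<le> s" using z triangle_mono[of "Suc s" "m+n"] by (cases "Suc s \<le> m + n") auto
  qed
  then show ?thesis using mn by (simp add: pd1_def pd2_def)
qed

lemma rc_pds[rc_intros]: "rc f n a \<Longrightarrow> rc f n (\<lambda>xs. pds (a xs))"
proof -
  have "rc f 1 (\<lambda>xs. LEAST s. xs!0 < triangle (Suc s))"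
  proof (rule rc_minI1[where P="\<lambda>s x. x < triangle (Suc s)"])
    show "rc f 2 (\<lambda>xs. ind (\<not> xs!1 < triangle (Suc (xs!0))))"
      by (intro rc_intros; simp)
    fix x :: nat
    have tr: "x < triangle (Suc x)" for x by (induction x) auto
    then show "\<exists>m. x < triangle (Suc m)" by blast
  qed
  then have "rc f 1 (\<lambda>xs. pds (xs!0))" by (simp add: pds_def)
  then show "rc f n a \<Longrightarrow> rc f n (\<lambda>xs. pds (a xs))" by (rule rc_comp1)
qed

lemma pd1_alt: "pd1 z = z - triangle (pds z)"
proof -
  obtain m n where mn: "prod_decode z = (m, n)" by (cases "prod_decode z")
  then have z: "z = triangle (m + n) + m"
    using prod_decode_inverse[of z] by (simp add: prod_encode_def)
  then show ?thesis using mn by (simp add: pds_eq pd1_def pd2_def)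
qed

lemma rc_pd1[rc_intros]: "rc f n a \<Longrightarrow> rc f n (\<lambda>xs. pd1 (a xs))"
  by (rule rc_ext[where g="\<lambda>xs. a xs - triangle (pds (a xs))"]) ((intro rc_intros | simp)+, simp add: pd1_alt)

lemma rc_pd2[rc_intros]: "rc f n a \<Longrightarrow> rc f n (\<lambda>xs. pd2 (a xs))"
  by (rule rc_ext[where g="\<lambda>xs. pds (a xs) - pd1 (a xs)"]) ((intro rc_intros | simp)+, simp add: pds_eq)

lemma pe_ge1: "a \<le> pe a b" and pe_ge2: "b \<le> pe a b"
  by (auto simp: pe_def le_prod_encode_1 le_prod_encode_2)

lemma pe_gt2: "0 < a \<Longrightarrow> b < pe a b"
proof -
  assume "0 < a"
  have "b \<le> triangle (a + b)" by (induction b) auto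
  then show ?thesis using \<open>0 < a\<close> unfolding pe_def prod_encode_def by simp
qed

lemma pd_le: "pd1 z \<le> z" "pd2 z \<le> z"
  using pe_ge1[of "pd1 z" "pd2 z"] pe_ge2[of "pd2 z" "pd1 z"] by simp_all

definition ltl :: "nat \<Rightarrow> nat" where "ltl l = (if l = 0 then 0 else pd2 (l - 1))"
definition lhd :: "nat \<Rightarrow> nat" where "lhd l = pd1 (l - 1)"

lemma list_decode_pd: "l \<noteq> 0 \<Longrightarrow> list_decode l = lhd l # list_decode (ltl l)"
  by (cases l) (auto simp: lhd_def ltl_def pd1_def pd2_def split: prod.split)

lemma rc_ltl[rc_intros]: "rc f n a \<Longrightarrow> rc f n (\<lambda>xs. ltl (a xs))"
  unfolding ltl_def by (intro rc_intros | simp)+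

lemma rc_lhd[rc_intros]: "rc f n a \<Longrightarrow> rc f n (\<lambda>xs. lhd (a xs))"
  unfolding lhd_def by (intro rc_intros | simp)+

definition ltln :: "nat \<Rightarrow> nat \<Rightarrow> nat" where "ltln k l = (ltl ^^ k) l"

lemma ltln_decode: "list_decode (ltln k l) = drop k (list_decode l)"
proof (induction k)
  case 0 then show ?case by (simp add: ltln_def)
next
  case (Suc k)
  have "ltln (Suc k) l = ltl (ltln k l)" by (simp add: ltln_def)
  moreover have "list_decode (ltl m) = tl (list_decode m)" for m
    by (cases "m = 0") (auto simp: list_decode_pd ltl_def)
  ultimately show ?case using Suc by (simp add: drop_Suc tl_drop)
qed

lemma list_decode_0_iff: "list_decode l = [] \<longleftrightarrow> l = 0"
  by (metis list_decode.simps(1) list_decode_inverse list_encode.simps(1))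

lemma rc_ltln[rc_intros]: "rc f n a \<Longrightarrow> rc f n b \<Longrightarrow> rc f n (\<lambda>xs. ltln (a xs) (b xs))"
proof -
  have "rc f 2 (\<lambda>xs. ltln (xs!0) (xs!1))"
    by (rule rc_rec2[where G="\<lambda>y. y" and H="\<lambda>k r y. ltl r"]) (simp add: ltln_def, simp add: ltln_def, (intro rc_intros | simp)+)
  then show "rc f n a \<Longrightarrow> rc f n b \<Longrightarrow> rc f n (\<lambda>xs. ltln (a xs) (b xs))" by (rule rc_comp2)
qed

definition llen :: "nat \<Rightarrow> nat" where "llen l = length (list_decode l)"

lemma llen_least: "llen l = (LEAST k. ltln k l = 0)"
proof (rule Least_equality[symmetric])
  show "ltln (llen l) l = 0" using ltln_decode[of "llen l" l] by (simp add: llen_def list_decode_0_iff[symmetric])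
  fix k assume "ltln k l = 0"
  then show "llen l \<le> k" using ltln_decode[of k l] by (simp add: llen_def)
qed

lemma rc_llen[rc_intros]: "rc f n a \<Longrightarrow> rc f n (\<lambda>xs. llen (a xs))"
proof -
  have "rc f 1 (\<lambda>xs. LEAST k. ltln k (xs!0) = 0)"
  proof (rule rc_minI1[where P="\<lambda>k x. ltln k x = 0"])
    show "rc f 2 (\<lambda>xs. ind (\<not> ltln (xs!0) (xs!1) = 0))"
      by (intro rc_intros; simp)
    fix x :: nat
    have "ltln (llen x) x = 0" using ltln_decode[of "llen x" x] by (simp add: llen_def list_decode_0_iff[symmetric])
    then show "\<exists>m. ltln m x = 0" by blast
  qed
  then have "rc f 1 (\<lambda>xs. llen (xs!0))" by (simp add: llen_least)
  then show "rc f n a \<Longrightarrow> rc f n (\<lambda>xs. llen (a xs))" by (rule rc_comp1)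
qed

lemma rc_ball:
  assumes "rc f 2 (\<lambda>xs. ind (P (xs!0) (xs!1)))"
  shows "rc f 1 (\<lambda>xs. ind (\<forall>x\<le>xs!0. P x (xs!0)))"
proof -
  define A where "A k c = ind (\<forall>x\<le>k. P x c)" for k c
  have "rc f 2 (\<lambda>xs. A (xs!0) (xs!1))"
  proof (rule rc_rec2[where G="\<lambda>c. ind (P 0 c)" and H="\<lambda>k r c. r * ind (P (Suc k) c)"])
    show "A 0 y = ind (P 0 y)" for y by (simp add: A_def)
    show "A (Suc k) y = A k y * ind (P (Suc k) y)" for k y
      by (auto simp: A_def ind_def le_Suc_eq)
    show "rc f 1 (\<lambda>xs. ind (P 0 (xs!0)))"
      by (rule rc_comp2[OF assms]) (intro rc_intros | simp)+
    show "rc f 3 (\<lambda>xs. xs!1 * ind (P (Suc (xs!0)) (xs!2)))"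
      by (intro rc_mult rc_proj rc_comp2[OF assms] rc_Suc; simp)
  qed
  then have "rc f 1 (\<lambda>xs. A (xs!0) (xs!0))" by (rule rc_comp2) (intro rc_intros; simp)+
  then show ?thesis by (simp add: A_def)
qed

definition hb :: "nat \<Rightarrow> nat \<Rightarrow> nat \<Rightarrow> nat" where "hb H i b = H div 2^(6*i+b) mod 2"

lemma rc_hb[rc_intros]: "rc f n a \<Longrightarrow> rc f n b \<Longrightarrow> rc f n c \<Longrightarrow> rc f n (\<lambda>xs. hb (a xs) (b xs) (c xs))"
  unfolding hb_def by (intro rc_intros | simp)+

definition twf :: "clang \<Rightarrow> nat \<Rightarrow> nat \<Rightarrow> nat" where
  "twf L c H = (if pd1 c = 0 then 1 else if pd1 c = 1 then
      ind (pd1 (pd2 c) \<in> fsyms L \<and> llen (pd2 (pd2 c)) = farity L (pd1 (pd2 c)) \<and> hb H (pd2 (pd2 c)) 2 = 1)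
    else 0)"
definition tcl :: "clang \<Rightarrow> nat \<Rightarrow> nat \<Rightarrow> nat \<Rightarrow> nat" where
  "tcl L x c H = (if pd1 c = 0 then ind (pd2 c \<noteq> x) else if pd1 c = 1 then
      ind (pd1 (pd2 c) \<in> fsyms L \<and> llen (pd2 (pd2 c)) = farity L (pd1 (pd2 c)) \<and> hb H (pd2 (pd2 c)) 3 = 1)
    else 0)"
definition lwf :: "nat \<Rightarrow> nat \<Rightarrow> nat" where
  "lwf c H = (if c = 0 then 1 else ind (hb H (lhd c) 0 = 1 \<and> hb H (ltl c) 2 = 1))"
definition lcl :: "nat \<Rightarrow> nat \<Rightarrow> nat" where
  "lcl c H = (if c = 0 then 1 else ind (hb H (lhd c) 1 = 1 \<and> hb H (ltl c) 3 = 1))"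
definition tstep :: "clang \<Rightarrow> nat \<Rightarrow> nat \<Rightarrow> nat \<Rightarrow> nat" where
  "tstep L x c H = twf L c H + 2 * tcl L x c H + 4 * lwf c H + 8 * lcl c H"

definition fwf :: "clang \<Rightarrow> nat \<Rightarrow> nat \<Rightarrow> nat" where
  "fwf L c H = (if pd1 c = 0 then
      ind (pd1 (pd2 c) \<in> rsyms L \<and> llen (pd2 (pd2 c)) = rarity L (pd1 (pd2 c)) \<and> hb H (pd2 (pd2 c)) 2 = 1)
    else if pd1 c = 1 then ind (hb H (pd1 (pd2 c)) 0 = 1 \<and> hb H (pd2 (pd2 c)) 0 = 1)
    else if pd1 c = 2 \<or> pd1 c = 3 \<or> pd1 c = 4 then hb H (pd2 c) 4
    else if pd1 c = 5 then ind (hb H (pd1 (pd2 c)) 4 = 1 \<and> hb H (pd2 (pd2 c)) 4 = 1)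
    else if pd1 c = 6 \<or> pd1 c = 7 then hb H (pd2 (pd2 c)) 4
    else 0)"
definition fcl :: "clang \<Rightarrow> nat \<Rightarrow> nat \<Rightarrow> nat \<Rightarrow> nat" where
  "fcl L x c H = (if pd1 c = 0 then
      ind (pd1 (pd2 c) \<in> rsyms L \<and> llen (pd2 (pd2 c)) = rarity L (pd1 (pd2 c)) \<and> hb H (pd2 (pd2 c)) 3 = 1)
    else if pd1 c = 1 then ind (hb H (pd1 (pd2 c)) 1 = 1 \<and> hb H (pd2 (pd2 c)) 1 = 1)
    else if pd1 c = 2 \<or> pd1 c = 3 \<or> pd1 c = 4 then hb H (pd2 c) 5
    else if pd1 c = 5 then ind (hb H (pd1 (pd2 c)) 5 = 1 \<and> hb H (pd2 (pd2 c)) 5 = 1)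
    else if pd1 c = 6 \<or> pd1 c = 7 then ind (hb H (pd2 (pd2 c)) 4 = 1 \<and> (pd1 (pd2 c) = x \<or> hb H (pd2 (pd2 c)) 5 = 1))
    else 0)"

definition entry :: "clang \<Rightarrow> nat \<Rightarrow> nat \<Rightarrow> nat \<Rightarrow> nat" where
  "entry L x c H = tstep L x c H + 16 * fwf L c (H + 2^(6*c) * tstep L x c H)
      + 32 * fcl L x c (H + 2^(6*c) * tstep L x c H)"

fun hist :: "clang \<Rightarrow> nat \<Rightarrow> nat \<Rightarrow> nat" where
  "hist L x 0 = 0"
| "hist L x (Suc z) = hist L x z + 2^(6*z) * entry L x z (hist L x z)"

definition sentchk :: "clang \<Rightarrow> nat \<Rightarrow> bool" where
  "sentchk L c \<longleftrightarrow> hb (hist L 0 (Suc c)) c 4 = 1 \<and> (\<forall>x\<le>c. hb (hist L x (Suc c)) c 5 = 1)"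

context
  fixes L :: clang and f :: "nat \<Rightarrow> nat"
  assumes cl: "computable_lang L"
begin

lemma rc_fsyms[rc_intros]: "rc f n a \<Longrightarrow> rc f n (\<lambda>xs. ind (a xs \<in> fsyms L))"
  using cl rc_from_decidable unfolding computable_lang_def by blast
lemma rc_rsyms[rc_intros]: "rc f n a \<Longrightarrow> rc f n (\<lambda>xs. ind (a xs \<in> rsyms L))"
  using cl rc_from_decidable unfolding computable_lang_def by blast
lemma rc_farity[rc_intros]: "rc f n a \<Longrightarrow> rc f n (\<lambda>xs. farity L (a xs))"
  using cl rc_from_computable unfolding computable_lang_def by blast
lemma rc_rarity[rc_intros]: "rc f n a \<Longrightarrow> rc f n (\<lambda>xs. rarity L (a xs))"
  using cl rc_from_computable unfolding computable_lang_def by blast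

lemma rc_tstep[rc_intros]: "rc f n a \<Longrightarrow> rc f n b \<Longrightarrow> rc f n c \<Longrightarrow> rc f n (\<lambda>xs. tstep L (a xs) (b xs) (c xs))"
  unfolding tstep_def twf_def tcl_def lwf_def lcl_def by (intro rc_intros | simp)+

lemma rc_entry[rc_intros]: "rc f n a \<Longrightarrow> rc f n b \<Longrightarrow> rc f n c \<Longrightarrow> rc f n (\<lambda>xs. entry L (a xs) (b xs) (c xs))"
  unfolding entry_def fwf_def fcl_def by (intro rc_intros | simp)+

lemma rc_hist[rc_intros]: "rc f n a \<Longrightarrow> rc f n b \<Longrightarrow> rc f n (\<lambda>xs. hist L (a xs) (b xs))"
proof -
  have "rc f 2 (\<lambda>xs. (\<lambda>z x. hist L x z) (xs!0) (xs!1))"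
    by (rule rc_rec2[where G="\<lambda>x. 0" and H="\<lambda>k r x. r + 2^(6*k) * entry L x k r"]) (simp, simp, (intro rc_intros | simp)+)
  from rc_swap[OF this] have "rc f 2 (\<lambda>xs. hist L (xs!0) (xs!1))" by simp
  then show "rc f n a \<Longrightarrow> rc f n b \<Longrightarrow> rc f n (\<lambda>xs. hist L (a xs) (b xs))" by (rule rc_comp2)
qed

lemma rc_sentchk: "rc f n a \<Longrightarrow> rc f n (\<lambda>xs. ind (sentchk L (a xs)))"
proof -
  have b: "rc f 1 (\<lambda>xs. ind (\<forall>x\<le>xs!0. (\<lambda>x c. hb (hist L x (Suc c)) c 5 = 1) x (xs!0)))"
    by (rule rc_ball) (intro rc_intros | simp)+
  have "rc f 1 (\<lambda>xs. ind (sentchk L (xs!0)))"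
    unfolding sentchk_def by (intro rc_ind_conj b[simplified] rc_intros | simp)+
  then show "rc f n a \<Longrightarrow> rc f n (\<lambda>xs. ind (sentchk L (a xs)))" by (rule rc_comp1)
qed

end

lemma code_trm_pe[simp]: "code_trm (Var y) = pe 0 y" "code_trm (Fn s ts) = pe 1 (pe s (list_encode (map code_trm ts)))"
  by (auto simp: pe_def)

lemma code_fm_pe[simp]:
  "code_fm (Rel r ts) = pe 0 (pe r (list_encode (map code_trm ts)))"
  "code_fm (Dist t u) = pe 1 (pe (code_trm t) (code_trm u))"
  "code_fm (CZero p) = pe 2 (code_fm p)"
  "code_fm (COne p) = pe 3 (code_fm p)"
  "code_fm (Half p) = pe 4 (code_fm p)"
  "code_fm (Monus p q) = pe 5 (pe (code_fm p) (code_fm q))"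
  "code_fm (Sup x p) = pe 6 (pe x (code_fm p))"
  "code_fm (Inf x p) = pe 7 (pe x (code_fm p))"
  by (auto simp: pe_def)

lemma list_encode_pe[simp]: "list_encode (x # xs) = Suc (pe x (list_encode xs))"
  by (simp add: pe_def)

declare code_trm.simps[simp del] code_fm.simps[simp del] list_encode.simps(2)[simp del]

lemma pe_eq_iff: "pe a b = c \<longleftrightarrow> a = pd1 c \<and> b = pd2 c"
  by (metis pd_pe pe_pd)

lemma llen_encode[simp]: "llen (list_encode xs) = length xs"
  by (simp add: llen_def)

lemma lhd_ltl_Suc[simp]: "lhd (Suc (pe a b)) = a" "ltl (Suc (pe a b)) = b"
  by (auto simp: lhd_def ltl_def)

definition WT where "WT L c \<longleftrightarrow> (\<exists>t. code_trm t = c \<and> wf_trm L t)"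
definition CT where "CT L x c \<longleftrightarrow> (\<exists>t. code_trm t = c \<and> wf_trm L t \<and> x \<notin> fv_trm t)"
definition WL where "WL L c \<longleftrightarrow> (\<exists>ts. list_encode (map code_trm ts) = c \<and> (\<forall>t\<in>set ts. wf_trm L t))"
definition CL where "CL L x c \<longleftrightarrow> (\<exists>ts. list_encode (map code_trm ts) = c \<and> (\<forall>t\<in>set ts. wf_trm L t \<and> x \<notin> fv_trm t))"
definition WF where "WF L c \<longleftrightarrow> (\<exists>p. code_fm p = c \<and> wf_fm L p)"
definition CF where "CF L x c \<longleftrightarrow> (\<exists>p. code_fm p = c \<and> wf_fm L p \<and> x \<notin> fv_fm p)"

lemma WT_iff: "WT L c \<longleftrightarrow> pd1 c = 0 \<or> (pd1 c = 1 \<and> pd1 (pd2 c) \<in> fsyms L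
    \<and> llen (pd2 (pd2 c)) = farity L (pd1 (pd2 c)) \<and> WL L (pd2 (pd2 c)))"
proof
  assume "WT L c"
  then obtain t where t: "code_trm t = c" "wf_trm L t" unfolding WT_def by blast
  show "pd1 c = 0 \<or> (pd1 c = 1 \<and> pd1 (pd2 c) \<in> fsyms L
    \<and> llen (pd2 (pd2 c)) = farity L (pd1 (pd2 c)) \<and> WL L (pd2 (pd2 c)))"
  proof (cases t)
    case (Var y) then show ?thesis using t by auto
  next
    case (Fn s ts) then show ?thesis using t unfolding WL_def by auto
  qed
next
  assume a: "pd1 c = 0 \<or> (pd1 c = 1 \<and> pd1 (pd2 c) \<in> fsyms L
    \<and> llen (pd2 (pd2 c)) = farity L (pd1 (pd2 c)) \<and> WL L (pd2 (pd2 c)))"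
  show "WT L c"
  proof (cases "pd1 c = 0")
    case True
    then have "code_trm (Var (pd2 c)) = c" by (metis code_trm_pe(1) pe_pd)
    then show ?thesis unfolding WT_def by (metis wf_trm.simps(1))
  next
    case False
    with a obtain ts where ts: "list_encode (map code_trm ts) = pd2 (pd2 c)" "\<forall>t\<in>set ts. wf_trm L t"
      and c: "pd1 c = 1" "pd1 (pd2 c) \<in> fsyms L" "llen (pd2 (pd2 c)) = farity L (pd1 (pd2 c))"
      unfolding WL_def by blast
    have "code_trm (Fn (pd1 (pd2 c)) ts) = c" using ts c by (simp add: pe_eq_iff)
    moreover have "length ts = farity L (pd1 (pd2 c))" using c(3) ts(1)[symmetric] by simp
    ultimately show ?thesis unfolding WT_def using ts c by (intro exI[of _ "Fn (pd1 (pd2 c)) ts"]) auto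
  qed
qed

lemma CT_iff: "CT L x c \<longleftrightarrow> (pd1 c = 0 \<and> pd2 c \<noteq> x) \<or> (pd1 c = 1 \<and> pd1 (pd2 c) \<in> fsyms L
    \<and> llen (pd2 (pd2 c)) = farity L (pd1 (pd2 c)) \<and> CL L x (pd2 (pd2 c)))"
proof
  assume "CT L x c"
  then obtain t where t: "code_trm t = c" "wf_trm L t" "x \<notin> fv_trm t" unfolding CT_def by blast
  show "(pd1 c = 0 \<and> pd2 c \<noteq> x) \<or> (pd1 c = 1 \<and> pd1 (pd2 c) \<in> fsyms L
    \<and> llen (pd2 (pd2 c)) = farity L (pd1 (pd2 c)) \<and> CL L x (pd2 (pd2 c)))"
  proof (cases t)
    case (Var y) then show ?thesis using t by auto
  next
    case (Fn s ts) then show ?thesis using t unfolding CL_def by auto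
  qed
next
  assume a: "(pd1 c = 0 \<and> pd2 c \<noteq> x) \<or> (pd1 c = 1 \<and> pd1 (pd2 c) \<in> fsyms L
    \<and> llen (pd2 (pd2 c)) = farity L (pd1 (pd2 c)) \<and> CL L x (pd2 (pd2 c)))"
  show "CT L x c"
  proof (cases "pd1 c = 0")
    case True
    then have "code_trm (Var (pd2 c)) = c" by (metis code_trm_pe(1) pe_pd)
    then show ?thesis unfolding CT_def using a True by (intro exI[of _ "Var (pd2 c)"]) auto
  next
    case False
    with a obtain ts where ts: "list_encode (map code_trm ts) = pd2 (pd2 c)" "\<forall>t\<in>set ts. wf_trm L t \<and> x \<notin> fv_trm t"
      and c: "pd1 c = 1" "pd1 (pd2 c) \<in> fsyms L" "llen (pd2 (pd2 c)) = farity L (pd1 (pd2 c))"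
      unfolding CL_def by blast
    have "code_trm (Fn (pd1 (pd2 c)) ts) = c" using ts c by (simp add: pe_eq_iff)
    moreover have "length ts = farity L (pd1 (pd2 c))" using c(3) ts(1)[symmetric] by simp
    ultimately show ?thesis unfolding CT_def using ts c by (intro exI[of _ "Fn (pd1 (pd2 c)) ts"]) auto
  qed
qed

lemma Suc_pe_lhd: "c \<noteq> 0 \<Longrightarrow> Suc (pe (lhd c) (ltl c)) = c"
  by (cases c) (auto simp: lhd_def ltl_def)

lemma WL_iff: "WL L c \<longleftrightarrow> c = 0 \<or> (WT L (lhd c) \<and> WL L (ltl c))"
proof
  assume "WL L c"
  then obtain ts where ts: "list_encode (map code_trm ts) = c" "\<forall>t\<in>set ts. wf_trm L t" unfolding WL_def by blast
  show "c = 0 \<or> (WT L (lhd c) \<and> WL L (ltl c))"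
  proof (cases ts)
    case Nil then show ?thesis using ts by simp
  next
    case (Cons t ts') then show ?thesis using ts unfolding WT_def WL_def by auto
  qed
next
  assume a: "c = 0 \<or> (WT L (lhd c) \<and> WL L (ltl c))"
  show "WL L c"
  proof (cases "c = 0")
    case True then show ?thesis unfolding WL_def by (intro exI[of _ "[]"]) simp
  next
    case False
    with a obtain t ts where "code_trm t = lhd c" "wf_trm L t" "list_encode (map code_trm ts) = ltl c" "\<forall>t\<in>set ts. wf_trm L t"
      unfolding WT_def WL_def by blast
    then show ?thesis unfolding WL_def using Suc_pe_lhd[OF False] by (intro exI[of _ "t # ts"]) auto
  qed
qed

lemma CL_iff: "CL L x c \<longleftrightarrow> c = 0 \<or> (CT L x (lhd c) \<and> CL L x (ltl c))"
proof
  assume "CL L x c"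
  then obtain ts where ts: "list_encode (map code_trm ts) = c" "\<forall>t\<in>set ts. wf_trm L t \<and> x \<notin> fv_trm t" unfolding CL_def by blast
  show "c = 0 \<or> (CT L x (lhd c) \<and> CL L x (ltl c))"
  proof (cases ts)
    case Nil then show ?thesis using ts by simp
  next
    case (Cons t ts') then show ?thesis using ts unfolding CT_def CL_def by auto
  qed
next
  assume a: "c = 0 \<or> (CT L x (lhd c) \<and> CL L x (ltl c))"
  show "CL L x c"
  proof (cases "c = 0")
    case True then show ?thesis unfolding CL_def by (intro exI[of _ "[]"]) simp
  next
    case False
    with a obtain t ts where "code_trm t = lhd c" "wf_trm L t" "x \<notin> fv_trm t" "list_encode (map code_trm ts) = ltl c"
      "\<forall>t\<in>set ts. wf_trm L t \<and> x \<notin> fv_trm t"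
      unfolding CT_def CL_def by blast
    then show ?thesis unfolding CL_def using Suc_pe_lhd[OF False] by (intro exI[of _ "t # ts"]) auto
  qed
qed

lemma WT_I: "wf_trm L t \<Longrightarrow> WT L (code_trm t)" unfolding WT_def by blast
lemma CT_I: "wf_trm L t \<Longrightarrow> x \<notin> fv_trm t \<Longrightarrow> CT L x (code_trm t)" unfolding CT_def by blast
lemma WL_I: "\<forall>t\<in>set ts. wf_trm L t \<Longrightarrow> WL L (list_encode (map code_trm ts))" unfolding WL_def by blast
lemma CL_I: "\<forall>t\<in>set ts. wf_trm L t \<and> x \<notin> fv_trm t \<Longrightarrow> CL L x (list_encode (map code_trm ts))" unfolding CL_def by blast
lemma WF_I: "wf_fm L p \<Longrightarrow> WF L (code_fm p)" unfolding WF_def by blast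
lemma CF_I: "wf_fm L p \<Longrightarrow> x \<notin> fv_fm p \<Longrightarrow> CF L x (code_fm p)" unfolding CF_def by blast

lemma WF_iff: "WF L c \<longleftrightarrow>
   (pd1 c = 0 \<and> pd1 (pd2 c) \<in> rsyms L \<and> llen (pd2 (pd2 c)) = rarity L (pd1 (pd2 c)) \<and> WL L (pd2 (pd2 c)))
 \<or> (pd1 c = 1 \<and> WT L (pd1 (pd2 c)) \<and> WT L (pd2 (pd2 c)))
 \<or> ((pd1 c = 2 \<or> pd1 c = 3 \<or> pd1 c = 4) \<and> WF L (pd2 c))
 \<or> (pd1 c = 5 \<and> WF L (pd1 (pd2 c)) \<and> WF L (pd2 (pd2 c)))
 \<or> ((pd1 c = 6 \<or> pd1 c = 7) \<and> WF L (pd2 (pd2 c)))" (is "_ \<longleftrightarrow> ?R")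
proof
  assume "WF L c"
  then obtain p where p: "code_fm p = c" "wf_fm L p" unfolding WF_def by blast
  show ?R unfolding p(1)[symmetric] using p(2) by (cases p) (auto intro: WT_I WL_I WF_I)
next
  assume a: ?R
  have c: "c = pe (pd1 c) (pd2 c)" "pd2 c = pe (pd1 (pd2 c)) (pd2 (pd2 c))" by simp_all
  from a show "WF L c"
  proof (elim disjE conjE)
    assume h: "pd1 c = 0" "pd1 (pd2 c) \<in> rsyms L" "llen (pd2 (pd2 c)) = rarity L (pd1 (pd2 c))" "WL L (pd2 (pd2 c))"
    then obtain ts where ts: "list_encode (map code_trm ts) = pd2 (pd2 c)" "\<forall>t\<in>set ts. wf_trm L t" unfolding WL_def by blast
    have "length ts = rarity L (pd1 (pd2 c))" using h(3) ts(1)[symmetric] by simp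
    then show ?thesis unfolding WF_def using h ts c by (intro exI[of _ "Rel (pd1 (pd2 c)) ts"]) (auto simp: pe_eq_iff)
  next
    assume h: "pd1 c = 1" "WT L (pd1 (pd2 c))" "WT L (pd2 (pd2 c))"
    then obtain t u where "code_trm t = pd1 (pd2 c)" "wf_trm L t" "code_trm u = pd2 (pd2 c)" "wf_trm L u" unfolding WT_def by blast
    then show ?thesis unfolding WF_def using h by (intro exI[of _ "Dist t u"]) (auto simp: pe_eq_iff)
  next
    assume h: "pd1 c = 2" "WF L (pd2 c)"
    then obtain q where "code_fm q = pd2 c" "wf_fm L q" unfolding WF_def by blast
    then show ?thesis unfolding WF_def using h by (intro exI[of _ "CZero q"]) (auto simp: pe_eq_iff)
  next
    assume h: "pd1 c = 3" "WF L (pd2 c)"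
    then obtain q where "code_fm q = pd2 c" "wf_fm L q" unfolding WF_def by blast
    then show ?thesis unfolding WF_def using h by (intro exI[of _ "COne q"]) (auto simp: pe_eq_iff)
  next
    assume h: "pd1 c = 4" "WF L (pd2 c)"
    then obtain q where "code_fm q = pd2 c" "wf_fm L q" unfolding WF_def by blast
    then show ?thesis unfolding WF_def using h by (intro exI[of _ "Half q"]) (auto simp: pe_eq_iff)
  next
    assume h: "pd1 c = 5" "WF L (pd1 (pd2 c))" "WF L (pd2 (pd2 c))"
    then obtain q r where "code_fm q = pd1 (pd2 c)" "wf_fm L q" "code_fm r = pd2 (pd2 c)" "wf_fm L r" unfolding WF_def by blast
    then show ?thesis unfolding WF_def using h by (intro exI[of _ "Monus q r"]) (auto simp: pe_eq_iff)
  next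
    assume h: "pd1 c = 6" "WF L (pd2 (pd2 c))"
    then obtain q where "code_fm q = pd2 (pd2 c)" "wf_fm L q" unfolding WF_def by blast
    then show ?thesis unfolding WF_def using h by (intro exI[of _ "Sup (pd1 (pd2 c)) q"]) (auto simp: pe_eq_iff)
  next
    assume h: "pd1 c = 7" "WF L (pd2 (pd2 c))"
    then obtain q where "code_fm q = pd2 (pd2 c)" "wf_fm L q" unfolding WF_def by blast
    then show ?thesis unfolding WF_def using h by (intro exI[of _ "Inf (pd1 (pd2 c)) q"]) (auto simp: pe_eq_iff)
  qed
qed

lemma CF_iff: "CF L x c \<longleftrightarrow>
   (pd1 c = 0 \<and> pd1 (pd2 c) \<in> rsyms L \<and> llen (pd2 (pd2 c)) = rarity L (pd1 (pd2 c)) \<and> CL L x (pd2 (pd2 c)))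
 \<or> (pd1 c = 1 \<and> CT L x (pd1 (pd2 c)) \<and> CT L x (pd2 (pd2 c)))
 \<or> ((pd1 c = 2 \<or> pd1 c = 3 \<or> pd1 c = 4) \<and> CF L x (pd2 c))
 \<or> (pd1 c = 5 \<and> CF L x (pd1 (pd2 c)) \<and> CF L x (pd2 (pd2 c)))
 \<or> ((pd1 c = 6 \<or> pd1 c = 7) \<and> WF L (pd2 (pd2 c)) \<and> (pd1 (pd2 c) = x \<or> CF L x (pd2 (pd2 c))))" (is "_ \<longleftrightarrow> ?R")
proof
  assume "CF L x c"
  then obtain p where p: "code_fm p = c" "wf_fm L p" "x \<notin> fv_fm p" unfolding CF_def by blast
  show ?R unfolding p(1)[symmetric] using p(2,3) by (cases p) (auto intro: CT_I CL_I CF_I WF_I)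
next
  assume a: ?R
  have c: "c = pe (pd1 c) (pd2 c)" "pd2 c = pe (pd1 (pd2 c)) (pd2 (pd2 c))" by simp_all
  from a show "CF L x c"
  proof (elim disjE conjE)
    assume h: "pd1 c = 0" "pd1 (pd2 c) \<in> rsyms L" "llen (pd2 (pd2 c)) = rarity L (pd1 (pd2 c))" "CL L x (pd2 (pd2 c))"
    then obtain ts where ts: "list_encode (map code_trm ts) = pd2 (pd2 c)" "\<forall>t\<in>set ts. wf_trm L t \<and> x \<notin> fv_trm t" unfolding CL_def by blast
    have "length ts = rarity L (pd1 (pd2 c))" using h(3) ts(1)[symmetric] by simp
    then show ?thesis unfolding CF_def using h ts c by (intro exI[of _ "Rel (pd1 (pd2 c)) ts"]) (auto simp: pe_eq_iff)
  next
    assume h: "pd1 c = 1" "CT L x (pd1 (pd2 c))" "CT L x (pd2 (pd2 c))"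
    then obtain t u where "code_trm t = pd1 (pd2 c)" "wf_trm L t" "code_trm u = pd2 (pd2 c)" "wf_trm L u"
      "x \<notin> fv_trm t" "x \<notin> fv_trm u" unfolding CT_def by blast
    then show ?thesis unfolding CF_def using h by (intro exI[of _ "Dist t u"]) (auto simp: pe_eq_iff)
  next
    assume h: "pd1 c = 2" "CF L x (pd2 c)"
    then obtain q where "code_fm q = pd2 c" "wf_fm L q" "x \<notin> fv_fm q" unfolding CF_def by blast
    then show ?thesis unfolding CF_def using h by (intro exI[of _ "CZero q"]) (auto simp: pe_eq_iff)
  next
    assume h: "pd1 c = 3" "CF L x (pd2 c)"
    then obtain q where "code_fm q = pd2 c" "wf_fm L q" "x \<notin> fv_fm q" unfolding CF_def by blast
    then show ?thesis unfolding CF_def using h by (intro exI[of _ "COne q"]) (auto simp: pe_eq_iff)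
  next
    assume h: "pd1 c = 4" "CF L x (pd2 c)"
    then obtain q where "code_fm q = pd2 c" "wf_fm L q" "x \<notin> fv_fm q" unfolding CF_def by blast
    then show ?thesis unfolding CF_def using h by (intro exI[of _ "Half q"]) (auto simp: pe_eq_iff)
  next
    assume h: "pd1 c = 5" "CF L x (pd1 (pd2 c))" "CF L x (pd2 (pd2 c))"
    then obtain q r where "code_fm q = pd1 (pd2 c)" "wf_fm L q" "code_fm r = pd2 (pd2 c)" "wf_fm L r"
      "x \<notin> fv_fm q" "x \<notin> fv_fm r" unfolding CF_def by blast
    then show ?thesis unfolding CF_def using h by (intro exI[of _ "Monus q r"]) (auto simp: pe_eq_iff)
  next
    assume h: "pd1 c = 6" "WF L (pd2 (pd2 c))" "pd1 (pd2 c) = x"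
    then obtain q where "code_fm q = pd2 (pd2 c)" "wf_fm L q" unfolding WF_def by blast
    then show ?thesis unfolding CF_def using h by (intro exI[of _ "Sup (pd1 (pd2 c)) q"]) (auto simp: pe_eq_iff)
  next
    assume h: "pd1 c = 6" "WF L (pd2 (pd2 c))" "CF L x (pd2 (pd2 c))"
    then obtain q where "code_fm q = pd2 (pd2 c)" "wf_fm L q" "x \<notin> fv_fm q" unfolding CF_def by blast
    then show ?thesis unfolding CF_def using h by (intro exI[of _ "Sup (pd1 (pd2 c)) q"]) (auto simp: pe_eq_iff)
  next
    assume h: "pd1 c = 7" "WF L (pd2 (pd2 c))" "pd1 (pd2 c) = x"
    then obtain q where "code_fm q = pd2 (pd2 c)" "wf_fm L q" unfolding WF_def by blast
    then show ?thesis unfolding CF_def using h by (intro exI[of _ "Inf (pd1 (pd2 c)) q"]) (auto simp: pe_eq_iff)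
  next
    assume h: "pd1 c = 7" "WF L (pd2 (pd2 c))" "CF L x (pd2 (pd2 c))"
    then obtain q where "code_fm q = pd2 (pd2 c)" "wf_fm L q" "x \<notin> fv_fm q" unfolding CF_def by blast
    then show ?thesis unfolding CF_def using h by (intro exI[of _ "Inf (pd1 (pd2 c)) q"]) (auto simp: pe_eq_iff)
  qed
qed

lemma hb_low: "k < m \<Longrightarrow> (H + 2^m * v) div 2^k mod 2 = H div 2^k mod (2::nat)"
proof -
  assume "k < m"
  then obtain d where m': "m = Suc (k + d)" using less_imp_Suc_add by blast
  then have m: "m = k + Suc d" by simp
  have e: "(2::nat)^m * v = 2^k * (2 * (2^d * v))" unfolding m power_add by simp
  have "(H + 2^k * (2 * (2^d * v))) div 2^k = 2 * (2^d * v) + H div 2^k"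
    by (rule div_mult_self2) simp
  then have "(H + 2^m * v) div 2^k = 2 * (2^d * v) + H div 2^k" unfolding e .
  then show ?thesis by (simp only: mod_mult_self4)
qed

lemma hb_high: "H < 2^m \<Longrightarrow> (H + 2^m * v) div 2^(m+b) = v div (2::nat)^b"
proof -
  assume "H < 2^m"
  then have "(H + 2^m * v) div 2^m = v" by simp
  then show ?thesis by (simp add: power_add div_mult2_eq)
qed

definition nest6 :: "nat \<Rightarrow> nat \<Rightarrow> nat \<Rightarrow> nat \<Rightarrow> nat \<Rightarrow> nat \<Rightarrow> nat" where
  "nest6 a0 a1 a2 a3 a4 a5 = a0 + 2 * (a1 + 2 * (a2 + 2 * (a3 + 2 * (a4 + 2 * a5))))"

lemma dpow: "(x::nat) div 2^Suc k = x div 2 div 2^k"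
  by (metis div_mult2_eq power_Suc)

lemma nd: "a \<le> 1 \<Longrightarrow> (a + 2 * r) div 2 = (r::nat)"
  by simp

lemma nm: "a \<le> 1 \<Longrightarrow> (a + 2 * r) mod 2 = (a::nat)"
  by simp

lemma nest6_shift: "a0 \<le> 1 \<Longrightarrow> nest6 a0 a1 a2 a3 a4 a5 div 2^Suc b = nest6 a1 a2 a3 a4 a5 0 div 2^b"
  unfolding dpow nest6_def by (subst nd) simp_all

lemma nest6_0: assumes "a0 \<le> 1" shows "nest6 a0 a1 a2 a3 a4 a5 div 2^0 mod 2 = a0"
  by (simp only: nest6_def power_0 div_by_1 nm[OF assms])

lemma nest6_bit:
  "a0 \<le> 1 \<Longrightarrow> a1 \<le> 1 \<Longrightarrow> a2 \<le> 1 \<Longrightarrow> a3 \<le> 1 \<Longrightarrow> a4 \<le> 1 \<Longrightarrow> a5 \<le> 1 \<Longrightarrow> b < 6 \<Longrightarrow>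
   nest6 a0 a1 a2 a3 a4 a5 div 2^b mod 2 = [a0,a1,a2,a3,a4,a5] ! b"
proof (induction b arbitrary: a0 a1 a2 a3 a4 a5)
  case 0 then show ?case using nest6_0 by simp
next
  case (Suc b)
  have "nest6 a0 a1 a2 a3 a4 a5 div 2^Suc b mod 2 = nest6 a1 a2 a3 a4 a5 0 div 2^b mod 2"
    using nest6_shift[OF Suc.prems(1)] by simp
  also have "\<dots> = [a1,a2,a3,a4,a5,0] ! b" using Suc by simp
  also have "\<dots> = [a0,a1,a2,a3,a4,a5] ! Suc b" using Suc.prems(7)
    by (cases b; cases "b - 1"; cases "b - 2"; cases "b - 3"; cases "b - 4") auto
  finally show ?case .
qed

definition sem :: "clang \<Rightarrow> nat \<Rightarrow> nat \<Rightarrow> nat" where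
  "sem L x c = nest6 (ind (WT L c)) (ind (CT L x c)) (ind (WL L c)) (ind (CL L x c))
     (ind (WF L c)) (ind (CF L x c))"

definition sb :: "clang \<Rightarrow> nat \<Rightarrow> nat \<Rightarrow> nat \<Rightarrow> nat" where
  "sb L x i b = sem L x i div 2^b mod 2"

lemma ind_le1[simp]: "ind P \<le> Suc 0" by (simp add: ind_def)
lemma ind_Suc0[simp]: "ind P = Suc 0 \<longleftrightarrow> P" "Suc 0 = ind P \<longleftrightarrow> P" "1 = ind P \<longleftrightarrow> P" "0 = ind P \<longleftrightarrow> \<not> P"
  by (auto simp: ind_def)

lemma sb_eq: "b < 6 \<Longrightarrow> sb L x i b = [ind (WT L i), ind (CT L x i), ind (WL L i), ind (CL L x i), ind (WF L i), ind (CF L x i)] ! b"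
  unfolding sb_def sem_def by (rule nest6_bit) simp_all

lemma sb_simps[simp]: "sb L x i 0 = ind (WT L i)" "sb L x i 1 = ind (CT L x i)" "sb L x i 2 = ind (WL L i)"
  "sb L x i 3 = ind (CL L x i)" "sb L x i 4 = ind (WF L i)" "sb L x i 5 = ind (CF L x i)"
  "sb L x i (Suc 0) = ind (CT L x i)"
  by (simp_all add: sb_eq)

lemma sem_lt: "sem L x c < 64"
proof -
  have "ind (WT L c) \<le> 1" "ind (CT L x c) \<le> 1" "ind (WL L c) \<le> 1" "ind (CL L x c) \<le> 1"
    "ind (WF L c) \<le> 1" "ind (CF L x c) \<le> 1" by simp_all
  then show ?thesis unfolding sem_def nest6_def by (simp only: distrib_left)
qed

lemma pd2_lt: "pd1 c \<noteq> 0 \<Longrightarrow> pd2 c < c"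
  using pe_gt2[of "pd1 c" "pd2 c"] by simp

lemma lhd_lt: "c \<noteq> 0 \<Longrightarrow> lhd c < c" and ltl_lt: "c \<noteq> 0 \<Longrightarrow> ltl c < c"
  using Suc_pe_lhd[of c] pe_ge1[of "lhd c" "ltl c"] pe_ge2[of "ltl c" "lhd c"] by simp_all

definition good :: "clang \<Rightarrow> nat \<Rightarrow> nat \<Rightarrow> nat \<Rightarrow> bool" where
  "good L x H c \<longleftrightarrow> H < 2^(6*c) \<and> (\<forall>i<c. \<forall>b<6. hb H i b = sb L x i b)"

lemma tstep_ok:
  assumes g: "good L x H c"
  shows "tstep L x c H = ind (WT L c) + 2 * ind (CT L x c) + 4 * ind (WL L c) + 8 * ind (CL L x c)"
proof -
  have lk: "\<And>i b. i < c \<Longrightarrow> b < 6 \<Longrightarrow> hb H i b = sb L x i b" using g unfolding good_def by blast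
  have p2: "pd1 c \<noteq> 0 \<Longrightarrow> pd2 (pd2 c) < c" using pd2_lt[of c] pd_le(2)[of "pd2 c"] by linarith
  have "twf L c H = ind (WT L c)"
    unfolding twf_def WT_iff[of L c] using lk[of "pd2 (pd2 c)" 2] p2 by (auto simp: ind_def)
  moreover have "tcl L x c H = ind (CT L x c)"
    unfolding tcl_def CT_iff[of L x c] using lk[of "pd2 (pd2 c)" 3] p2 by (auto simp: ind_def)
  moreover have "lwf c H = ind (WL L c)"
    unfolding lwf_def WL_iff[of L c] using lk[of "lhd c" 0] lk[of "ltl c" 2] lhd_lt[of c] ltl_lt[of c]
    by (auto simp: ind_def)
  moreover have "lcl c H = ind (CL L x c)"
    unfolding lcl_def CL_iff[of L x c] using lk[of "lhd c" 1] lk[of "ltl c" 3] lhd_lt[of c] ltl_lt[of c]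
    by (auto simp: ind_def)
  ultimately show ?thesis unfolding tstep_def by simp
qed

lemma entry_ok:
  assumes g: "good L x H c"
  shows "entry L x c H = sem L x c"
proof -
  have lk: "\<And>i b. i < c \<Longrightarrow> b < 6 \<Longrightarrow> hb H i b = sb L x i b" and Hlt: "H < 2^(6*c)"
    using g unfolding good_def by blast+
  define T where "T = tstep L x c H"
  have T: "T = nest6 (ind (WT L c)) (ind (CT L x c)) (ind (WL L c)) (ind (CL L x c)) 0 0"
    unfolding T_def nest6_def using tstep_ok[OF g] by simp
  define H' where "H' = H + 2^(6*c) * T"
  have lk': "hb H' i b = sb L x i b" if "i \<le> c" "b < 6" "i < c \<or> b < 4" for i b
  proof (cases "i < c")
    case True
    then have "6*i+b < 6*c" using that by linarith
    then show ?thesis unfolding H'_def hb_def using hb_low lk[OF True that(2)] unfolding hb_def by simp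
  next
    case False
    then have ic: "i = c" "b < 4" using that by auto
    have "hb H' i b = T div 2^b mod 2" unfolding H'_def hb_def ic using hb_high[OF Hlt] by simp
    also have "\<dots> = [ind (WT L c), ind (CT L x c), ind (WL L c), ind (CL L x c), 0, 0] ! b"
      unfolding T by (rule nest6_bit) (use ic in simp_all)
    also have "\<dots> = sb L x i b"
    proof -
      have "b = 0 \<or> b = 1 \<or> b = 2 \<or> b = 3" using ic by auto
      then show ?thesis using sb_eq[of b L x i] ic by auto
    qed
    finally show ?thesis .
  qed
  have p2: "pd1 c \<noteq> 0 \<Longrightarrow> pd2 (pd2 c) < c" "pd1 c \<noteq> 0 \<Longrightarrow> pd1 (pd2 c) < c" "pd1 c \<noteq> 0 \<Longrightarrow> pd2 c < c"
    using pd2_lt[of c] pd_le(1,2)[of "pd2 c"] by linarith+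
  have p0: "pd2 (pd2 c) \<le> c" using pd_le(2)[of c] pd_le(2)[of "pd2 c"] by linarith
  have "fwf L c H' = ind (WF L c)"
  proof -
    consider "pd1 c = 0" | "pd1 c = 1" | "pd1 c = 2 \<or> pd1 c = 3 \<or> pd1 c = 4" | "pd1 c = 5"
      | "pd1 c = 6 \<or> pd1 c = 7" | "pd1 c > 7" by linarith
    then show ?thesis
    proof cases
      case 1 then show ?thesis unfolding fwf_def WF_iff[of L c] using lk'[of "pd2 (pd2 c)" 2] p0 by simp
    next
      case 2 then show ?thesis unfolding fwf_def WF_iff[of L c]
        using lk'[of "pd1 (pd2 c)" 0] lk'[of "pd2 (pd2 c)" 0] p2 by simp
    next
      case 3 then show ?thesis unfolding fwf_def WF_iff[of L c] using lk'[of "pd2 c" 4] p2 by auto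
    next
      case 4 then show ?thesis unfolding fwf_def WF_iff[of L c]
        using lk'[of "pd1 (pd2 c)" 4] lk'[of "pd2 (pd2 c)" 4] p2 by simp
    next
      case 5 then show ?thesis unfolding fwf_def WF_iff[of L c] using lk'[of "pd2 (pd2 c)" 4] p2 by auto
    next
      case 6 then show ?thesis unfolding fwf_def WF_iff[of L c] by simp
    qed
  qed
  moreover have "fcl L x c H' = ind (CF L x c)"
  proof -
    consider "pd1 c = 0" | "pd1 c = 1" | "pd1 c = 2 \<or> pd1 c = 3 \<or> pd1 c = 4" | "pd1 c = 5"
      | "pd1 c = 6 \<or> pd1 c = 7" | "pd1 c > 7" by linarith
    then show ?thesis
    proof cases
      case 1 then show ?thesis unfolding fcl_def CF_iff[of L x c] using lk'[of "pd2 (pd2 c)" 3] p0 by simp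
    next
      case 2 then show ?thesis unfolding fcl_def CF_iff[of L x c]
        using lk'[of "pd1 (pd2 c)" 1] lk'[of "pd2 (pd2 c)" 1] p2 by simp
    next
      case 3 then show ?thesis unfolding fcl_def CF_iff[of L x c] using lk'[of "pd2 c" 5] p2 by auto
    next
      case 4 then show ?thesis unfolding fcl_def CF_iff[of L x c]
        using lk'[of "pd1 (pd2 c)" 5] lk'[of "pd2 (pd2 c)" 5] p2 by simp
    next
      case 5 then show ?thesis unfolding fcl_def CF_iff[of L x c]
        using lk'[of "pd2 (pd2 c)" 4] lk'[of "pd2 (pd2 c)" 5] p2 by auto
    next
      case 6 then show ?thesis unfolding fcl_def CF_iff[of L x c] by simp
    qed
  qed
  ultimately show ?thesis unfolding entry_def sem_def nest6_def
    using tstep_ok[OF g] unfolding H'_def T_def by simp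
qed

lemma hist_good: "good L x (hist L x z) z"
proof (induction z)
  case 0 then show ?case by (simp add: good_def)
next
  case (Suc z)
  have e: "entry L x z (hist L x z) = sem L x z" by (rule entry_ok[OF Suc])
  have Hlt: "hist L x z < 2^(6*z)" using Suc unfolding good_def by blast
  have lt: "hist L x (Suc z) < 2^(6 * Suc z)"
  proof -
    have "hist L x (Suc z) = hist L x z + 2^(6*z) * sem L x z" using e by simp
    also have "\<dots> < 2^(6*z) + 2^(6*z) * 63"
      using Hlt sem_lt[of L x z] by (intro add_less_le_mono) auto
    also have "\<dots> = 2^(6 * Suc z)" by (simp add: power_add)
    finally show ?thesis .
  qed
  have "\<forall>i<Suc z. \<forall>b<6. hb (hist L x (Suc z)) i b = sb L x i b"
  proof (intro allI impI)
    fix i b :: nat assume i: "i < Suc z" and b: "b < 6"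
    show "hb (hist L x (Suc z)) i b = sb L x i b"
    proof (cases "i < z")
      case True
      then have "6*i+b < 6*z" using b by linarith
      then show ?thesis using Suc True b e hb_low unfolding good_def hb_def by simp
    next
      case False
      then have "i = z" using i by simp
      then show ?thesis using e hb_high[OF Hlt] unfolding hb_def sb_def by simp
    qed
  qed
  then show ?case using lt unfolding good_def by blast
qed

lemma hist_hb: "hb (hist L x (Suc c)) c b = sb L x c b" if "b < 6"
  using hist_good[of L x "Suc c"] that unfolding good_def by simp

lemma sentchk_iff: "sentchk L c \<longleftrightarrow> WF L c \<and> (\<forall>x\<le>c. CF L x c)"
  unfolding sentchk_def using hist_hb[of 4 L 0 c] hist_hb[of 5 L _ c] by simp

lemma pe_inj[simp]: "pe a b = pe c d \<longleftrightarrow> a = c \<and> b = d"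
  by (auto simp: pe_def)

declare list_encode_eq[simp]

lemma map_inj_aux: "(\<forall>t\<in>set ts. \<forall>u. g t = g u \<longrightarrow> t = u) \<Longrightarrow> map g ts = map g us \<Longrightarrow> ts = us"
proof (induction ts arbitrary: us)
  case Nil then show ?case by simp
next
  case (Cons t ts) then show ?case by (cases us) auto
qed

lemma code_trm_inj: "code_trm t = code_trm u \<Longrightarrow> t = u"
proof (induction t arbitrary: u)
  case (Var y) then show ?case by (cases u) auto
next
  case (Fn s ts)
  then show ?case
  proof (cases u)
    case (Var y) then show ?thesis using Fn by simp
  next
    case (Fn s' us)
    then have "s = s'" "map code_trm ts = map code_trm us" using Fn.prems by auto
    moreover have "ts = us" by (rule map_inj_aux[OF _ calculation(2)]) (use Fn.IH in blast)
    ultimately show ?thesis using Fn by simp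
  qed
qed

lemma map_code_trm_eq[simp]: "map code_trm ts = map code_trm us \<longleftrightarrow> ts = us"
  using map_inj_aux[of ts code_trm us] code_trm_inj by blast

lemma code_trm_eq[simp]: "code_trm t = code_trm u \<longleftrightarrow> t = u"
  using code_trm_inj by blast

lemma code_fm_inj: "code_fm p = code_fm q \<Longrightarrow> p = q"
  by (induction p arbitrary: q; case_tac q; simp)

lemma inj_code_fm: "inj code_fm"
  by (rule injI) (rule code_fm_inj)

lemma fm_of_code_code[simp]: "fm_of_code (code_fm p) = p"
  unfolding fm_of_code_def by (rule inv_f_f[OF inj_code_fm])

lemma le_list_encode: "y \<in> set ys \<Longrightarrow> y \<le> list_encode ys"
proof (induction ys)
  case Nil then show ?case by simp
next
  case (Cons a ys)
  have "a \<le> pe a (list_encode ys)" "list_encode ys \<le> pe a (list_encode ys)" by (rule pe_ge1, rule pe_ge2)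
  then show ?case using Cons by auto
qed

lemma fv_trm_le: "x \<in> fv_trm t \<Longrightarrow> x \<le> code_trm t"
proof (induction t)
  case (Var y) then show ?case using pe_ge2[of y 0] by simp
next
  case (Fn s ts)
  then obtain t where t: "t \<in> set ts" "x \<in> fv_trm t" by auto
  then have "x \<le> code_trm t" using Fn.IH by blast
  also have "\<dots> \<le> list_encode (map code_trm ts)" using t(1) by (intro le_list_encode) auto
  also have "\<dots> \<le> pe s (list_encode (map code_trm ts))" by (rule pe_ge2)
  also have "\<dots> \<le> code_trm (Fn s ts)" using pe_ge2 by simp
  finally show ?case .
qed

lemma fv_fm_le: "x \<in> fv_fm p \<Longrightarrow> x \<le> code_fm p"
proof (induction p)
  case (Rel r ts)
  then obtain t where t: "t \<in> set ts" "x \<in> fv_trm t" by auto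
  then have "x \<le> code_trm t" by (rule_tac fv_trm_le)
  also have "\<dots> \<le> list_encode (map code_trm ts)" using t(1) by (intro le_list_encode) auto
  also have "\<dots> \<le> pe r (list_encode (map code_trm ts))" by (rule pe_ge2)
  also have "\<dots> \<le> code_fm (Rel r ts)" using pe_ge2 by simp
  finally show ?case .
next
  case (Dist t u)
  then show ?case using fv_trm_le[of x t] fv_trm_le[of x u] pe_ge1[of "code_trm t" "code_trm u"]
    pe_ge2[of "code_trm u" "code_trm t"] pe_ge2[of "pe (code_trm t) (code_trm u)" 1] by auto
next
  case (CZero p) then show ?case using pe_ge2[of "code_fm p" 2] by simp
next
  case (COne p) then show ?case using pe_ge2[of "code_fm p" 3] by simp
next
  case (Half p) then show ?case using pe_ge2[of "code_fm p" 4] by simp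
next
  case (Monus p q) then show ?case using pe_ge1[of "code_fm p" "code_fm q"]
    pe_ge2[of "code_fm q" "code_fm p"] pe_ge2[of "pe (code_fm p) (code_fm q)" 5] by auto
next
  case (Sup y p) then show ?case using pe_ge2[of "code_fm p" y] pe_ge2[of "pe y (code_fm p)" 6] by auto
next
  case (Inf y p) then show ?case using pe_ge2[of "code_fm p" y] pe_ge2[of "pe y (code_fm p)" 7] by auto
qed

lemma sent_codes_iff: "c \<in> sent_codes L \<longleftrightarrow> sentchk L c"
  unfolding sentchk_iff
proof
  assume "c \<in> sent_codes L"
  then obtain p where p: "c = code_fm p" "wf_fm L p" "fv_fm p = {}" unfolding sent_codes_def sentence_def by auto
  then show "WF L c \<and> (\<forall>x\<le>c. CF L x c)" unfolding WF_def CF_def by auto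
next
  assume a: "WF L c \<and> (\<forall>x\<le>c. CF L x c)"
  then obtain p where p: "code_fm p = c" "wf_fm L p" unfolding WF_def by auto
  have "fv_fm p = {}"
  proof (rule ccontr)
    assume "fv_fm p \<noteq> {}"
    then obtain x where x: "x \<in> fv_fm p" by auto
    then have "x \<le> c" using fv_fm_le p(1) by blast
    then obtain q where "code_fm q = c" "x \<notin> fv_fm q" using a unfolding CF_def by blast
    then show False using p(1) x code_fm_inj by blast
  qed
  then show "c \<in> sent_codes L" unfolding sent_codes_def sentence_def using p by auto
qed

lemma struct_parts:
  assumes "is_structure L M"
  shows "univ M \<noteq> {}"
    "\<forall>x\<in>univ M. \<forall>y\<in>univ M. 0 \<le> dst M x y \<and> dst M x y \<le> 1
        \<and> (dst M x y = 0 \<longleftrightarrow> x = y) \<and> dst M x y = dst M y x"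
    "\<forall>c\<in>fsyms L. \<forall>xs. set xs \<subseteq> univ M \<and> length xs = farity L c \<longrightarrow> fint M c xs \<in> univ M"
    "\<forall>r\<in>rsyms L. \<forall>xs. set xs \<subseteq> univ M \<and> length xs = rarity L r
        \<longrightarrow> 0 \<le> rint M r xs \<and> rint M r xs \<le> 1"
proof -
  note D = assms[unfolded is_structure_def]
  show "univ M \<noteq> {}" by (rule D[THEN conjunct1])
  show "\<forall>x\<in>univ M. \<forall>y\<in>univ M. 0 \<le> dst M x y \<and> dst M x y \<le> 1
        \<and> (dst M x y = 0 \<longleftrightarrow> x = y) \<and> dst M x y = dst M y x" by (rule D[THEN conjunct2, THEN conjunct1])
  show "\<forall>c\<in>fsyms L. \<forall>xs. set xs \<subseteq> univ M \<and> length xs = farity L c \<longrightarrow> fint M c xs \<in> univ M"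
    by (rule D[THEN conjunct2, THEN conjunct2, THEN conjunct2, THEN conjunct2, THEN conjunct1])
  show "\<forall>r\<in>rsyms L. \<forall>xs. set xs \<subseteq> univ M \<and> length xs = rarity L r
        \<longrightarrow> 0 \<le> rint M r xs \<and> rint M r xs \<le> 1"
    by (rule D[THEN conjunct2, THEN conjunct2, THEN conjunct2, THEN conjunct2, THEN conjunct2,
          THEN conjunct2, THEN conjunct1])
qed

lemma struct_univ: "is_structure L M \<Longrightarrow> univ M \<noteq> {}"
  by (rule struct_parts(1))

lemma struct_dst: "is_structure L M \<Longrightarrow> x \<in> univ M \<Longrightarrow> y \<in> univ M \<Longrightarrow> 0 \<le> dst M x y \<and> dst M x y \<le> 1"
  using struct_parts(2) by blast

lemma struct_fint: "is_structure L M \<Longrightarrow> c \<in> fsyms L \<Longrightarrow> set xs \<subseteq> univ M \<Longrightarrow> length xs = farity L c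
  \<Longrightarrow> fint M c xs \<in> univ M"
  using struct_parts(3) by blast

lemma struct_rint: "is_structure L M \<Longrightarrow> r \<in> rsyms L \<Longrightarrow> set xs \<subseteq> univ M \<Longrightarrow> length xs = rarity L r
  \<Longrightarrow> 0 \<le> rint M r xs \<and> rint M r xs \<le> 1"
  using struct_parts(4) by blast

lemma tval_in: "is_structure L M \<Longrightarrow> (\<forall>x. s x \<in> univ M) \<Longrightarrow> wf_trm L t \<Longrightarrow> tval M s t \<in> univ M"
proof (induction t)
  case (Var x) then show ?case by simp
next
  case (Fn c ts)
  have "set (map (tval M s) ts) \<subseteq> univ M" using Fn by auto
  then show ?case using struct_fint[OF Fn.prems(1)] Fn.prems by simp
qed

lemma fval_bounds: "is_structure L M \<Longrightarrow> (\<forall>x. s x \<in> univ M) \<Longrightarrow> wf_fm L p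
   \<Longrightarrow> 0 \<le> fval M s p \<and> fval M s p \<le> 1"
proof (induction p arbitrary: s)
  case (Rel r ts)
  have "set (map (tval M s) ts) \<subseteq> univ M" using tval_in[OF Rel.prems(1,2)] Rel.prems(3) by auto
  then show ?case using struct_rint[OF Rel.prems(1), of r "map (tval M s) ts"] Rel.prems(3) by simp
next
  case (Dist t u)
  then show ?case using struct_dst[OF Dist.prems(1)] tval_in[OF Dist.prems(1,2)] by simp
next
  case (Monus p q)
  have "0 \<le> fval M s p \<and> fval M s p \<le> 1" "0 \<le> fval M s q \<and> fval M s q \<le> 1"
    using Monus.IH[OF Monus.prems(1,2)] Monus.prems(3) by auto
  then show ?case by simp
next
  case (Sup x p)
  let ?g = "\<lambda>a. fval M (s(x := a)) p"
  have g: "\<And>a. a \<in> univ M \<Longrightarrow> 0 \<le> ?g a \<and> ?g a \<le> 1" using Sup by simp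
  obtain a0 where a0: "a0 \<in> univ M" using struct_univ[OF Sup.prems(1)] by blast
  have bdd: "bdd_above (?g ` univ M)" unfolding bdd_above_def using g by blast
  have "0 \<le> ?g a0" using g a0 by blast
  also have "?g a0 \<le> (SUP a\<in>univ M. ?g a)" by (rule cSUP_upper[OF a0 bdd])
  finally have "0 \<le> (SUP a\<in>univ M. ?g a)" .
  moreover have "(SUP a\<in>univ M. ?g a) \<le> 1" using g a0 by (intro cSUP_least) auto
  ultimately show ?case by simp
next
  case (Inf x p)
  let ?g = "\<lambda>a. fval M (s(x := a)) p"
  have g: "\<And>a. a \<in> univ M \<Longrightarrow> 0 \<le> ?g a \<and> ?g a \<le> 1" using Inf by simp
  obtain a0 where a0: "a0 \<in> univ M" using struct_univ[OF Inf.prems(1)] by blast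
  have bdd: "bdd_below (?g ` univ M)" unfolding bdd_below_def using g by blast
  have "(INF a\<in>univ M. ?g a) \<le> ?g a0" by (rule cINF_lower[OF bdd a0])
  also have "?g a0 \<le> 1" using g a0 by blast
  finally have "(INF a\<in>univ M. ?g a) \<le> 1" .
  moreover have "0 \<le> (INF a\<in>univ M. ?g a)" using g a0 by (intro cINF_greatest) auto
  ultimately show ?case by simp
next
  case (Half p)
  have "0 \<le> fval M s p \<and> fval M s p \<le> 1" using Half.prems by (intro Half.IH) simp_all
  then show ?case by simp
qed simp_all

lemma sval_bounds: "is_structure L M \<Longrightarrow> wf_fm L p \<Longrightarrow> 0 \<le> sval M p \<and> sval M p \<le> 1"
  unfolding sval_def
proof (rule fval_bounds)
  assume "is_structure L M"
  then have "\<exists>a. a \<in> univ M" using struct_univ by blast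
  then show "\<forall>x. (SOME a. a \<in> univ M) \<in> univ M" by (metis someI_ex)
qed

definition th0 :: fm where "th0 = Sup 0 (Dist (Var 0) (Var 0))"
definition fOne :: fm where "fOne = COne th0"
definition fZero :: fm where "fZero = CZero th0"
fun fE :: "nat \<Rightarrow> fm" where "fE 0 = fOne" | "fE (Suc j) = Half (fE j)"
definition fAdd :: "fm \<Rightarrow> fm \<Rightarrow> fm" where "fAdd a b = Monus fOne (Monus (Monus fOne a) b)"
fun fS :: "nat \<Rightarrow> nat \<Rightarrow> fm" where "fS j 0 = fZero" | "fS j (Suc i) = fAdd (fS j i) (fE j)"

lemma th0_sent: "wf_fm L th0" "fv_fm th0 = {}" by (auto simp: th0_def)

lemma fE_sent: "wf_fm L (fE j)" "fv_fm (fE j) = {}"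
  by (induction j) (auto simp: fOne_def th0_def)

lemma fS_sent: "wf_fm L (fS j i)" "fv_fm (fS j i) = {}"
  by (induction i) (auto simp: fZero_def fOne_def th0_def fAdd_def fE_sent)

lemma fE_val: "fval M s (fE j) = 1 / 2^j"
proof (induction j)
  case 0 then show ?case by (simp add: fOne_def)
next
  case (Suc j) then show ?case by simp
qed

lemma fAdd_val: "fval M s a = A \<Longrightarrow> fval M s b = B \<Longrightarrow> 0 \<le> A \<Longrightarrow> 0 \<le> B \<Longrightarrow> A + B \<le> 1
  \<Longrightarrow> fval M s (fAdd a b) = A + B"
  unfolding fAdd_def fOne_def by simp

lemma fS_val: "i \<le> 2^j \<Longrightarrow> fval M s (fS j i) = real i / 2^j"
proof (induction i)
  case 0 then show ?case by (simp add: fZero_def)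
next
  case (Suc i)
  then have ih: "fval M s (fS j i) = real i / 2^j" by simp
  have "real (Suc i) \<le> real (2^j)" using Suc.prems by (simp only: of_nat_le_iff)
  then have le0: "real (Suc i) \<le> 2^j" by simp
  have e: "real i / 2^j + 1 / 2^j = real (Suc i) / 2^j" by (simp add: add_divide_distrib)
  have le: "real i / 2^j + 1 / 2^j \<le> 1" unfolding e using le0 by simp
  show ?case unfolding fS.simps e[symmetric]
    by (rule fAdd_val[OF ih fE_val]) (use le in simp_all)
qed

lemma code_fS_rec: "code_fm (fS j (Suc i)) = pe 5 (pe (code_fm fOne) (pe 5 (pe (pe 5 (pe (code_fm fOne) (code_fm (fS j i)))) (code_fm (fE j)))))"
  by (simp add: fAdd_def)

lemma rc_code_fE[rc_intros]: "rc f n a \<Longrightarrow> rc f n (\<lambda>xs. code_fm (fE (a xs)))"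
proof -
  have "rc f 1 (\<lambda>xs. code_fm (fE (xs!0)))"
    by (rule rc_rec1[where c="code_fm fOne" and H="\<lambda>k r. pe 4 r"]) (simp, simp, (intro rc_intros | simp)+)
  then show "rc f n a \<Longrightarrow> rc f n (\<lambda>xs. code_fm (fE (a xs)))" by (rule rc_comp1)
qed

lemma rc_code_fS[rc_intros]: "rc f n a \<Longrightarrow> rc f n b \<Longrightarrow> rc f n (\<lambda>xs. code_fm (fS (a xs) (b xs)))"
proof -
  have "rc f 2 (\<lambda>xs. (\<lambda>i j. code_fm (fS j i)) (xs!0) (xs!1))"
    by (rule rc_rec2[where G="\<lambda>j. code_fm fZero" and
          H="\<lambda>k r j. pe 5 (pe (code_fm fOne) (pe 5 (pe (pe 5 (pe (code_fm fOne) r)) (code_fm (fE j)))))"])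
       (simp, simp only: code_fS_rec, (intro rc_intros | simp)+)
  from rc_swap[OF this] have "rc f 2 (\<lambda>xs. code_fm (fS (xs!0) (xs!1)))" by simp
  then show "rc f n a \<Longrightarrow> rc f n b \<Longrightarrow> rc f n (\<lambda>xs. code_fm (fS (a xs) (b xs)))" by (rule rc_comp2)
qed

lemma quotient_of_char: "r = Fract p q \<Longrightarrow> q > 0 \<Longrightarrow> coprime p q \<Longrightarrow> quotient_of r = (p, q)"
  unfolding quotient_of_def by (rule the1_equality[OF quotient_of_unique]) simp

lemma int_encode_nat: "int_encode (int a) = 2 * a"
  by (simp add: int_encode_def sum_encode_def)

lemma int_decode_even: "int_decode (2 * u) = int u"
  by (simp add: int_decode_def sum_decode_def)

lemma code_rat_pos:
  assumes "0 < e"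
  shows "\<exists>a b. 0 < a \<and> 0 < b \<and> code_rat e = pe (2*a) b \<and> (of_rat e :: real) = real a / real b"
proof -
  obtain p q where pq: "quotient_of e = (p, q)" by (cases "quotient_of e")
  have q: "q > 0" using quotient_of_denom_pos[OF pq] .
  have e: "e = of_int p / of_int q" using quotient_of_div[OF pq] .
  have p: "p > 0" using assms q unfolding e by (simp add: zero_less_divide_iff)
  have "code_rat e = pe (2 * nat p) (nat q)"
    unfolding code_rat_def pq pe_def using p int_encode_nat[of "nat p"] by simp
  moreover have "(of_rat e :: real) = real (nat p) / real (nat q)"
    unfolding e using p q by (simp add: of_rat_divide)
  ultimately show ?thesis using p q by (intro exI[of _ "nat p"] exI[of _ "nat q"]) simp
qed

lemma code_rat_pow: "code_rat (1 / 2^n) = pe 2 (2^n)"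
proof -
  have "(1 / 2^n :: rat) = Fract 1 (2^n)" by (simp add: Fract_of_int_quotient)
  then have "quotient_of (1 / 2^n) = (1, 2^n)" by (rule quotient_of_char) simp_all
  then show ?thesis unfolding code_rat_def pe_def using int_encode_nat[of 1] by (simp add: nat_power_eq)
qed

lemma of_rat_pow: "(of_rat (1 / 2^n :: rat) :: real) = 1 / 2^n"
  by (simp add: of_rat_divide of_rat_power)

lemma decode_rat_even: "(of_rat (decode_rat (pe (2*u) v)) :: real) = real u / real v"
  unfolding decode_rat_def pe_def
  by (simp add: int_decode_even Fract_of_int_quotient of_rat_divide)

lemma lo_pe: "lo (pe (pe (2*u) v) w) = real u / real v"
  unfolding lo_def using decode_rat_even by (simp add: pd1_def[symmetric] pe_def[symmetric])

lemma hi_pe: "hi (pe w (pe (2*u) v)) = real u / real v"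
  unfolding hi_def using decode_rat_even by (simp add: pd2_def[symmetric] pe_def[symmetric])

lemma lo_nonpos: "lo m \<le> 0 \<longleftrightarrow> pd2 (pd1 m) = 0 \<or> pd1 (pd1 m) = 0 \<or> odd (pd1 (pd1 m))"
proof -
  define A where "A = pd1 (pd1 m)"
  define B where "B = pd2 (pd1 m)"
  have "lo m = real_of_int (int_decode A) / real B"
    unfolding lo_def decode_rat_def A_def B_def pd1_def pd2_def
    by (simp add: Fract_of_int_quotient of_rat_divide split: prod.split)
  moreover have "int_decode A \<le> 0 \<longleftrightarrow> A = 0 \<or> odd A"
    unfolding int_decode_def sum_decode_def by auto
  ultimately show ?thesis unfolding A_def[symmetric] B_def[symmetric]
    by (cases "B = 0") (auto simp: divide_nonpos_pos divide_le_0_iff)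
qed

lemma small_pow: "(\<forall>n::nat. x \<le> 1 / 2^n) \<Longrightarrow> (x::real) \<le> 0"
proof (rule ccontr)
  assume a: "\<forall>n::nat. x \<le> 1 / 2^n" "\<not> x \<le> 0"
  obtain n where "1 / x < (2::real)^n" using real_arch_pow[of 2 "1/x"] by auto
  then have "1 / 2^n < x" using a(2) by (simp add: field_simps)
  then show False using a(1) by (meson not_le)
qed

lemma rc_to_comp_in2: "rc f 2 (\<lambda>xs. g (xs!0) (xs!1)) \<Longrightarrow> comp_in2 f g"
  unfolding rc_def comp_in2_def
proof (elim exE, intro exI allI)
  fix p x y assume "\<forall>xs. length xs = 2 \<longrightarrow> reval f p xs (g (xs ! 0) (xs ! 1))"
  then show "reval f p [x, y] (g x y)" by (metis length_Cons list.size(3) nth_Cons_0 nth_Cons_Suc numeral_2_eq_2 One_nat_def)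
qed

lemma comp_in2_to_rc: "comp_in2 f g \<Longrightarrow> rc f 2 (\<lambda>xs. g (xs!0) (xs!1))"
  unfolding comp_in2_def rc_def
proof (elim exE, intro exI allI impI)
  fix p and xs :: "nat list" assume p: "\<forall>x y. reval f p [x, y] (g x y)" and "length xs = 2"
  then obtain x y where "xs = [x, y]" by (cases xs; cases "tl xs") (auto simp: numeral_2_eq_2)
  then show "reval f p xs (g (xs!0) (xs!1))" using p by auto
qed

lemma rc_to_comp_in2': "rc f 2 g \<Longrightarrow> comp_in2 f (\<lambda>x y. g [x, y])"
  by (rule rc_to_comp_in2, erule rc_ext) (auto simp: numeral_2_eq_2 length_Suc_conv)

lemma rc_minI2:
  assumes "rc f 3 (\<lambda>xs. ind (\<not> P (xs!0) (xs!1) (xs!2)))" "\<And>a b. \<exists>m. P m a b"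
  shows "rc f 2 (\<lambda>xs. LEAST m. P m (xs!0) (xs!1))"
proof (rule rc_minI[where P="\<lambda>m xs. P m (xs!0) (xs!1)"])
  have e: "Suc 2 = (3::nat)" by simp
  show "rc f (Suc 2) (\<lambda>xs. ind (\<not> (\<lambda>m xs. P m (xs!0) (xs!1)) (hd xs) (tl xs)))"
    unfolding e
  proof (rule rc_ext[OF assms(1)])
    fix xs :: "nat list" assume "length xs = 3"
    then obtain a b c where "xs = [a,b,c]" by (cases xs; cases "tl xs"; cases "tl (tl xs)") (auto simp: numeral_3_eq_3)
    then show "ind (\<not> P (xs!0) (xs!1) (xs!2)) = ind (\<not> (\<lambda>m xs. P m (xs!0) (xs!1)) (hd xs) (tl xs))" by simp
  qed
qed (use assms(2) in auto)

lemma sent_code_fm: "k \<in> sent_codes L \<Longrightarrow> code_fm (fm_of_code k) = k \<and> sentence L (fm_of_code k)"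
  unfolding sent_codes_def by auto

lemma th0_code: "code_fm th0 \<in> sent_codes L"
  unfolding sent_codes_def sentence_def using th0_sent by blast

lemma dir1:
  assumes cl: "computable_lang L" and st: "is_structure L M" and tc: "theory_computable_in D L M"
  shows "Pi1_in D (th_codes L M)"
proof -
  define V where "V k = sval M (fm_of_code k)" for k
  obtain f p where fD: "f \<in> D" and P: "\<forall>k\<in>sent_codes L. \<forall>e::rat. 0 < e \<longrightarrow>
        (\<exists>m. reval f p [k, code_rat e] m \<and> hi m - lo m < of_rat e \<and> lo m \<le> V k \<and> V k \<le> hi m)"
    using tc unfolding theory_computable_in_def V_def by blast
  define k0 where "k0 = code_fm th0"
  define kk where "kk k = (if sentchk L k then k else k0)" for k
  have kk: "kk k \<in> sent_codes L" for k
    unfolding kk_def k0_def using th0_code sent_codes_iff by auto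
  define Q where "Q k n m \<longleftrightarrow> reval f p [kk k, pe 2 (2^n)] m \<and> hi m - lo m < 1 / 2^n
      \<and> lo m \<le> V (kk k) \<and> V (kk k) \<le> hi m" for k n m
  define MM where "MM k n = (SOME m. Q k n m)" for k n
  have MM: "Q k n (MM k n)" for k n
  proof -
    have "\<exists>m. Q k n m"
      using P[rule_format, OF kk[of k], of "1 / 2^n"] unfolding Q_def code_rat_pow of_rat_pow by simp
    then show ?thesis unfolding MM_def by (rule someI_ex)
  qed
  define R where "R k n \<longleftrightarrow> sentchk L k \<and>
      (pd2 (pd1 (MM k n)) = 0 \<or> pd1 (pd1 (MM k n)) = 0 \<or> odd (pd1 (pd1 (MM k n))))" for k n
  have rcMM: "rc f 2 (\<lambda>xs. MM (xs!0) (xs!1))"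
  proof (rule rc_black2[where a="\<lambda>xs. kk (xs!0)" and b="\<lambda>xs. pe 2 (2^(xs!1))" and p=p])
    show "rc f 2 (\<lambda>xs. kk (xs!0))" unfolding kk_def
      by (intro rc_if rc_sentchk[OF cl] rc_intros; simp)
    show "rc f 2 (\<lambda>xs. pe 2 (2^(xs!1)))" by (intro rc_intros; simp)
    fix xs :: "nat list"
    show "reval f p [kk (xs!0), pe 2 (2^(xs!1))] (MM (xs!0) (xs!1))" using MM unfolding Q_def by blast
  qed
  have rcMM2: "\<And>a b n. rc f n a \<Longrightarrow> rc f n b \<Longrightarrow> rc f n (\<lambda>xs. MM (a xs) (b xs))"
    by (rule rc_comp2[OF rcMM])
  have "rc f 2 (\<lambda>xs. ind (R (xs!0) (xs!1)))"
    unfolding R_def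
    by (intro rc_ind_conj rc_sentchk[OF cl] rc_ind_disj rc_ind_eq rc_ind_not rc_ind_even rc_intros rcMM2) simp_all
  then have ci: "comp_in2 f (\<lambda>k n. if R k n then 1 else 0)"
    by (intro rc_to_comp_in2) (simp add: ind_def)
  have th: "th_codes L M = {k. \<forall>n. R k n}"
  proof (intro set_eqI iffI)
    fix k assume k: "k \<in> th_codes L M"
    then have ks: "k \<in> sent_codes L" and v0: "V k = 0" unfolding th_codes_def V_def by auto
    have sc: "sentchk L k" using ks sent_codes_iff by blast
    then have kkk: "kk k = k" unfolding kk_def by simp
    show "k \<in> {k. \<forall>n. R k n}"
    proof (intro CollectI allI)
      fix n
      have "lo (MM k n) \<le> 0" using MM[of k n] v0 kkk unfolding Q_def by simp
      then show "R k n" unfolding R_def lo_nonpos using sc by simp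
    qed
  next
    fix k assume "k \<in> {k. \<forall>n. R k n}"
    then have r: "\<And>n. R k n" by simp
    then have sc: "sentchk L k" unfolding R_def by simp
    then have ks: "k \<in> sent_codes L" using sent_codes_iff by blast
    have kkk: "kk k = k" using sc unfolding kk_def by simp
    have "V k \<le> 1 / 2^n" for n
    proof -
      have "lo (MM k n) \<le> 0" using r[of n] unfolding R_def lo_nonpos by simp
      then show ?thesis using MM[of k n] kkk unfolding Q_def by simp
    qed
    then have "V k \<le> 0" by (intro small_pow) simp
    moreover have "0 \<le> V k" unfolding V_def using sval_bounds[OF st] sent_code_fm[OF ks]
      unfolding sentence_def by blast
    ultimately have "V k = 0" by simp
    then show "k \<in> th_codes L M" unfolding th_codes_def V_def using ks by simp
  qed
  show ?thesis unfolding Pi1_in_def using fD ci th by blast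
qed

lemma sval_Monus: "sval M (Monus p q) = max (sval M p - sval M q) 0"
  by (simp add: sval_def)

lemma sval_fS: "i \<le> 2^j \<Longrightarrow> sval M (fS j i) = real i / 2^j"
  by (simp add: sval_def fS_val)

lemma ex_pow: "0 < a \<Longrightarrow> \<exists>j. 2 * b < a * 2^j" for a b :: nat
proof -
  assume a: "0 < a"
  have "2 * b < 2^(2*b)" by (rule less_exp)
  also have "\<dots> \<le> a * 2^(2*b)" using a by simp
  finally show ?thesis by blast
qed

lemma dir2:
  assumes cl: "computable_lang L" and st: "is_structure L M" and pi: "Pi1_in D (th_codes L M)"
  shows "theory_computable_in D L M"
proof -
  define V where "V k = sval M (fm_of_code k)" for k
  obtain f R where fD: "f \<in> D" and ci: "comp_in2 f (\<lambda>k n. if R k n then 1 else 0)"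
    and th: "th_codes L M = {k. \<forall>n. R k n}"
    using pi unfolding Pi1_in_def by blast
  have rR0: "rc f 2 (\<lambda>xs. ind (R (xs!0) (xs!1)))"
    using comp_in2_to_rc[OF ci] by (simp add: ind_def)
  have rR: "\<And>a b n. rc f n a \<Longrightarrow> rc f n b \<Longrightarrow> rc f n (\<lambda>xs. ind (R (a xs) (b xs)))"
    by (rule rc_comp2[OF rR0])
  have thR: "c \<in> sent_codes L \<Longrightarrow> (\<forall>n. R c n) \<longleftrightarrow> V c = 0" for c
    using th unfolding th_codes_def V_def by blast
  have sem1: "c1 \<in> sent_codes L \<and> V c1 = max (real (Suc i) / 2^J - V k) 0"
    if k: "k \<in> sent_codes L" and i: "Suc i \<le> 2^J" and c1: "c1 = pe 5 (pe (code_fm (fS J (Suc i))) k)" for k i J c1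
  proof -
    obtain phi where phi: "code_fm phi = k" "sentence L phi" "fm_of_code k = phi" using sent_code_fm[OF k] by blast
    have e: "c1 = code_fm (Monus (fS J (Suc i)) phi)" using c1 phi by simp
    have "sentence L (Monus (fS J (Suc i)) phi)"
      using phi fS_sent(1)[of L J "Suc i"] fS_sent(2)[of J "Suc i"] unfolding sentence_def by (simp del: fS.simps)
    then have "c1 \<in> sent_codes L" unfolding e sent_codes_def by blast
    moreover have "V c1 = max (real (Suc i) / 2^J - V k) 0"
      unfolding V_def e fm_of_code_code sval_Monus sval_fS[OF i] using phi by simp
    ultimately show ?thesis by blast
  qed
  have sem2: "c2 \<in> sent_codes L \<and> V c2 = max (V k - real (i - 1) / 2^J) 0"
    if k: "k \<in> sent_codes L" and i: "i - 1 \<le> 2^J" and c2: "c2 = pe 5 (pe k (code_fm (fS J (i - 1))))" for k i J c2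
  proof -
    obtain phi where phi: "code_fm phi = k" "sentence L phi" "fm_of_code k = phi" using sent_code_fm[OF k] by blast
    have e: "c2 = code_fm (Monus phi (fS J (i - 1)))" using c2 phi by simp
    have "sentence L (Monus phi (fS J (i - 1)))"
      using phi fS_sent(1)[of L J "i - 1"] fS_sent(2)[of J "i - 1"] unfolding sentence_def by (simp del: fS.simps)
    then have "c2 \<in> sent_codes L" unfolding e sent_codes_def by blast
    moreover have "V c2 = max (V k - real (i - 1) / 2^J) 0"
      unfolding V_def e fm_of_code_code sval_Monus sval_fS[OF i] using phi by simp
    ultimately show ?thesis by blast
  qed
  have vb: "0 \<le> V k \<and> V k \<le> 1" if "k \<in> sent_codes L" for k
    unfolding V_def using sval_bounds[OF st] sent_code_fm[OF that] unfolding sentence_def by blast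
  define JJ where "JJ ec = (LEAST j. pd1 ec div 2 = 0 \<or> 2 * pd2 ec < (pd1 ec div 2) * 2^j)" for ec
  define c1 where "c1 k i j = pe 5 (pe (code_fm (fS j (Suc i))) k)" for k i j
  define c2 where "c2 k i j = pe 5 (pe k (code_fm (fS j (i - 1))))" for k i j
  define GOOD where "GOOD w k ec \<longleftrightarrow> \<not> sentchk L k \<or> (pd1 w \<le> 2^JJ ec
      \<and> (pd1 w = 2^JJ ec \<or> \<not> R (c1 k (pd1 w) (JJ ec)) (pd1 (pd2 w)))
      \<and> (pd1 w = 0 \<or> \<not> R (c2 k (pd1 w) (JJ ec)) (pd2 (pd2 w))))" for w k ec
  define WW where "WW k ec = (LEAST w. GOOD w k ec)" for k ec
  define OUT where "OUT k ec = pe (pe (2 * (pd1 (WW k ec) - 1)) (2^JJ ec)) (pe (2 * Suc (pd1 (WW k ec))) (2^JJ ec))" for k ec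
  have rcJJ: "rc f 1 (\<lambda>xs. JJ (xs!0))"
    unfolding JJ_def
  proof (rule rc_minI1[where P="\<lambda>j x. pd1 x div 2 = 0 \<or> 2 * pd2 x < (pd1 x div 2) * 2^j"])
    show "rc f 2 (\<lambda>xs. ind (\<not> (pd1 (xs!1) div 2 = 0 \<or> 2 * pd2 (xs!1) < (pd1 (xs!1) div 2) * 2^(xs!0))))"
      by (intro rc_intros) simp_all
    fix x :: nat
    show "\<exists>m. pd1 x div 2 = 0 \<or> 2 * pd2 x < (pd1 x div 2) * 2^m"
      using ex_pow[of "pd1 x div 2" "pd2 x"] by (cases "pd1 x div 2 = 0") auto
  qed
  have rcJJ2: "\<And>a n. rc f n a \<Longrightarrow> rc f n (\<lambda>xs. JJ (a xs))" by (rule rc_comp1[OF rcJJ])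
  have exW: "\<exists>w. GOOD w k ec" for k ec
  proof (cases "sentchk L k")
    case False then show ?thesis unfolding GOOD_def by blast
  next
    case True
    then have k: "k \<in> sent_codes L" using sent_codes_iff by blast
    define J where "J = JJ ec"
    define N where "N = (2::nat)^J"
    have Npos: "(0::real) < real N" unfolding N_def by simp
    have NJ: "real N = 2^J" unfolding N_def by simp
    define v where "v = V k"
    have v: "0 \<le> v" "v \<le> 1" using vb[OF k] unfolding v_def by auto
    define i where "i = nat \<lfloor>v * real N\<rfloor>"
    have fl: "real i \<le> v * real N" "v * real N < real i + 1"
      unfolding i_def using v Npos by (simp_all add: of_nat_nat)
    have iN: "i \<le> N"
    proof -
      have "v * real N \<le> real N" using v Npos by (simp add: mult_le_cancel_right1)
      then show ?thesis using fl(1) by linarith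
    qed
    obtain n1 where n1: "i = N \<or> \<not> R (c1 k i J) n1"
    proof (cases "i = N")
      case True then show ?thesis using that by blast
    next
      case False
      then have i1: "Suc i \<le> 2^J" using iN unfolding N_def by simp
      have s1: "c1 k i J \<in> sent_codes L \<and> V (c1 k i J) = max (real (Suc i) / 2^J - V k) 0"
        by (rule sem1[OF k i1]) (simp add: c1_def)
      have "v < real (Suc i) / 2^J" using fl(2) Npos NJ by (simp add: field_simps)
      then have "V (c1 k i J) \<noteq> 0" using s1 unfolding v_def by simp
      then obtain n where "\<not> R (c1 k i J) n" using thR[of "c1 k i J"] s1 by blast
      then show ?thesis using that by blast
    qed
    obtain n2 where n2: "i = 0 \<or> \<not> R (c2 k i J) n2"
    proof (cases "i = 0")
      case True then show ?thesis using that by blast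
    next
      case False
      have i1: "i - 1 \<le> 2^J" using iN unfolding N_def by simp
      have s2: "c2 k i J \<in> sent_codes L \<and> V (c2 k i J) = max (V k - real (i - 1) / 2^J) 0"
        by (rule sem2[OF k i1]) (simp add: c2_def)
      have "real (i - 1) < real i" using False by simp
      then have "real (i - 1) / 2^J < v" using fl(1) Npos NJ by (simp add: field_simps)
      then have "V (c2 k i J) \<noteq> 0" using s2 unfolding v_def by simp
      then obtain n where "\<not> R (c2 k i J) n" using thR[of "c2 k i J"] s2 by blast
      then show ?thesis using that by blast
    qed
    have "GOOD (pe i (pe n1 n2)) k ec"
      unfolding GOOD_def using iN n1 n2 unfolding J_def N_def by simp
    then show ?thesis by blast
  qed
  have rcW: "rc f 2 (\<lambda>xs. WW (xs!0) (xs!1))"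
    unfolding WW_def
  proof (rule rc_minI2[where P=GOOD])
    show "rc f 3 (\<lambda>xs. ind (\<not> GOOD (xs!0) (xs!1) (xs!2)))"
      unfolding GOOD_def c1_def c2_def
      by (intro rc_ind_not rc_ind_disj rc_ind_conj rc_sentchk[OF cl] rR rcJJ2 rc_intros) simp_all
  qed (rule exW)
  have rcW2: "\<And>a b n. rc f n a \<Longrightarrow> rc f n b \<Longrightarrow> rc f n (\<lambda>xs. WW (a xs) (b xs))" by (rule rc_comp2[OF rcW])
  have "rc f 2 (\<lambda>xs. OUT (xs!0) (xs!1))"
    unfolding OUT_def by (intro rc_intros rcW2 rcJJ2) simp_all
  then obtain p where p: "\<And>xs. length xs = 2 \<Longrightarrow> reval f p xs (OUT (xs!0) (xs!1))"
    unfolding rc_def by blast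
  show ?thesis unfolding theory_computable_in_def
  proof (intro bexI[OF _ fD] exI[of _ p] ballI allI impI)
    fix k and e :: rat assume k: "k \<in> sent_codes L" and e: "0 < e"
    obtain a b where ab: "0 < a" "0 < b" "code_rat e = pe (2*a) b" "(of_rat e :: real) = real a / real b"
      using code_rat_pos[OF e] by blast
    define ec where "ec = code_rat e"
    define J where "J = JJ ec"
    have J: "2 * b < a * 2^J"
    proof -
      have "pd1 ec div 2 = 0 \<or> 2 * pd2 ec < (pd1 ec div 2) * 2^J"
        unfolding J_def JJ_def by (rule LeastI_ex) (use ex_pow[OF ab(1), of b] ab in \<open>auto simp: ec_def\<close>)
      then show ?thesis using ab unfolding ec_def by simp
    qed
    have sc: "sentchk L k" using k sent_codes_iff by blast
    define w where "w = WW k ec"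
    have G: "GOOD w k ec" unfolding w_def WW_def by (rule LeastI_ex) (rule exW)
    define i where "i = pd1 w"
    have G': "i \<le> 2^J" "i = 2^J \<or> \<not> R (c1 k i J) (pd1 (pd2 w))" "i = 0 \<or> \<not> R (c2 k i J) (pd2 (pd2 w))"
      using G sc unfolding GOOD_def i_def J_def by auto
    define m where "m = OUT k ec"
    have lo: "lo m = real (i - 1) / 2^J" unfolding m_def OUT_def lo_pe i_def w_def J_def by simp
    have hi: "hi m = real (Suc i) / 2^J" unfolding m_def OUT_def hi_pe i_def w_def J_def by simp
    have v: "0 \<le> V k" "V k \<le> 1" using vb[OF k] by auto
    have rv: "reval f p [k, code_rat e] m" using p[of "[k, ec]"] unfolding m_def ec_def by simp
    have width: "hi m - lo m < of_rat e"
    proof -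
      have "real (Suc i) - real (i - 1) \<le> 2" by linarith
      then have "hi m - lo m \<le> 2 / 2^J" unfolding lo hi by (simp add: diff_divide_distrib[symmetric] divide_right_mono)
      also have "2 / 2^J < real a / real b"
      proof -
        have "real (2 * b) < real (a * 2^J)" using J by (simp only: of_nat_less_iff)
        then have "2 * real b < real a * 2^J" by simp
        then show ?thesis using ab by (simp add: field_simps)
      qed
      finally show ?thesis using ab by simp
    qed
    have lov: "lo m \<le> V k"
    proof (cases "i = 0")
      case True then show ?thesis unfolding lo using v by simp
    next
      case False
      then have nr: "\<not> R (c2 k i J) (pd2 (pd2 w))" using G' by simp
      have i1: "i - 1 \<le> 2^J" using G'(1) by simp
      have s2: "c2 k i J \<in> sent_codes L \<and> V (c2 k i J) = max (V k - real (i - 1) / 2^J) 0"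
        by (rule sem2[OF k i1]) (simp add: c2_def)
      then have "V (c2 k i J) \<noteq> 0" using thR[of "c2 k i J"] nr by blast
      then show ?thesis unfolding lo using s2 by (simp add: max_def split: if_splits)
    qed
    have vhi: "V k \<le> hi m"
    proof (cases "i = 2^J")
      case True
      then have "hi m = (2^J + 1) / 2^J" unfolding hi by simp
      also have "\<dots> \<ge> 1" by (simp add: field_simps)
      finally show ?thesis using v by simp
    next
      case False
      then have nr: "\<not> R (c1 k i J) (pd1 (pd2 w))" using G' by simp
      have i1: "Suc i \<le> 2^J" using G'(1) False by simp
      have s1: "c1 k i J \<in> sent_codes L \<and> V (c1 k i J) = max (real (Suc i) / 2^J - V k) 0"
        by (rule sem1[OF k i1]) (simp add: c1_def)
      then have "V (c1 k i J) \<noteq> 0" using thR[of "c1 k i J"] nr by blast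
      then show ?thesis unfolding hi using s1 by (simp add: max_def split: if_splits)
    qed
    show "\<exists>m. reval f p [k, code_rat e] m \<and> hi m - lo m < of_rat e
        \<and> lo m \<le> sval M (fm_of_code k) \<and> sval M (fm_of_code k) \<le> hi m"
      using rv width lov vhi unfolding V_def by blast
  qed
qed

theorem mainTheorem1:
  fixes L :: clang and M :: "'a cstruct" and D :: "(nat \<Rightarrow> nat) set"
  assumes "computable_lang L"
    and "is_structure L M"
    and "turing_degree D"
  shows "theory_computable_in D L M \<longleftrightarrow> Pi1_in D (th_codes L M)"
  using dir1[OF assms(1,2)] dir2[OF assms(1,2)] by blast

end
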